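(* Let $A$ be a cirquent and let $B$ be a purification of $A$ (a final output of the Purification procedure applied to $A$). Then: (1) if $B$ is provable in $\mathbf{CL16}$, then so is $A$; (2) $A$ is valid iff $B$ is valid; (3) $B$ is pure; (4) $\overline{B}\le\overline{A}$.
   Context: Cirquents. Fix elementary letters $p,q,\dots$; literals are $p$ and $\neg p$. Fix disjoint infinite sets of disjunctive and conjunctive clusters. Cirquents: $\top,\bot$ and literals; if $A,B$ are cirquents then so are $A\vee B$, $A\wedge B$, $A\sqcap^cB$ ($c$ conjunctive), $A\sqcup^cB$ ($c$ disjunctive). A cluster $c$ occurs in a cirquent if some $\sqcup^c$ or $\sqcap^c$ occurs in it. A surface occurrence is one not in the scope of any choice connective. Semantics and validity. LegRuns is the set of (finite or infinite) sequences of labeled moves (each labeled $\top$ = machine or $\bot$ = environment) in which every move is $c.0$ or $c.1$ for a cluster $c$, moves in disjunctive clusters are $\top$-labeled, moves in conjunctive clusters are $\bot$-labeled, and each cluster has at most one move. For $\Gamma\in$ LegRuns, $A\sqcup^cB$ or $A\sqcap^cB$ is resolved if $\Gamma$ contains $c.0$ or $c.1$, with resolvent $A$ or $B$. An interpretation $^*$ assigns each letter a value in $\{\top,\bot\}$. $C^*$ is the game with legal runs LegRuns, a legal run $\Gamma$ being won by $\top$ iff: $C=\top$; or $C$ is $p$ (resp. $\neg p$) with $p^*=\top$ (resp. $\bot$); or $C=A_0\vee A_1$ and $\Gamma$ is won in some $A_i$; or $C=A_0\wedge A_1$ and won in both; or $C=A_0\sqcup^cA_1$ is resolved and $\Gamma$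 is won in the resolvent; or $C=A_0\sqcap^cA_1$ and it is unresolved or $\Gamma$ is won in the resolvent. Illegal runs are lost by the player who made the first illegal move. An HPM is a Turing machine with an extra read-only run tape showing the current run, able to make moves, against an environment that may move at any time; it solves a game if all runs it generates are won by $\top$. $C$ is valid if one HPM solves $C^*$ for all interpretations $^*$. Rules of $\mathbf{CL16}$ (premise(s) $\leadsto$ conclusion; $X[E_1,\dots,E_n]$ denotes a cirquent with fixed subcirquents $E_i$, $X[F_1,\dots,F_n]$ replaces all occurrences of the $E_i$ by the $F_i$, the conclusion setting the context): Commutativity $X[B\vee A]\leadsto X[A\vee B]$, $X[B\wedge A]\leadsto X[A\wedge B]$; Associativity $X[A\vee(B\vee C)]\leadsto X[(A\vee B)\vee C]$, $X[A\wedge(B\wedge C)]\leadsto X[(A\wedge B)\wedge C]$; Identity $X[A]\leadsto X[A\vee\bot]$, $X[A]\leadsto X[A\wedge\top]$; Domination $X[\top]\leadsto X[A\vee\top]$, $X[\bot]\leadsto X[A\wedge\bot]$; Choosing $X[A_1,\dots,A_n]\leadsto X[A_1\sqcup^cB_1,\dots,A_n\sqcup^cB_n]$ and $X[B_1,\dots,B_n]\leadsto X[A_1\sqcup^cB_1,\dots,A_n\sqcup^cB_n]$ where the $A_i\sqcup^cB_i$ are all $\sqcup^c$-rooted subcirquents of the conclusion; Cleansing $X[Y[A]\sqcap^cC]\leadsto X[Y[A\sqcap^cB]\sqcap^cC]$, $X[C\sqcap^cY[B]]\leadsto X[C\sqcap^cY[A\sqcap^cB]]$; Distribution $X[(A\vee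 C)\wedge(B\vee C)]\leadsto X[(A\wedge B)\vee C]$, $X[(A\vee C)\sqcap^c(B\vee C)]\leadsto X[(A\sqcap^cB)\vee C]$; Trivialization $X[\top]\leadsto X[\neg p\vee p]$; Quadrilemma $X\big[\big((A\wedge(C\sqcap^bD))\sqcap^a(B\wedge(C\sqcap^bD))\big)\sqcap^c\big(((A\sqcap^aB)\wedge C)\sqcap^b((A\sqcap^aB)\wedge D)\big)\big]\leadsto X[(A\sqcap^aB)\wedge(C\sqcap^bD)]$ with $c$ not in the conclusion; Splitting $A,\ B\leadsto A\sqcap^cB$ with $c$ in neither $A$ nor $B$. A proof of $C$ is a sequence $C_1=\top,\dots,C_n=C$ each of whose members after the first follows from earlier ones by a rule. Rank: tetration ${}^1a=a$, ${}^{n+1}a=a^{({}^na)}$; $\overline{C}=1$ for $\top,\bot$, literals; $\overline{A\sqcup^cB}=\overline{A\sqcap^cB}=\overline{A}+\overline{B}$; $\overline{A\wedge B}=5^{\overline{A}+\overline{B}}$; $\overline{A\vee B}={}^{(\overline{A}+\overline{B})}5$. Pure: a cirquent $D$ is pure iff (1) $D$ has no surface occurrence of $\bot$ unless $D=\bot$; (2) no surface occurrence of $\wedge$ is in the scope of $\vee$; (3) no surface occurrence of any $\sqcap^c$ is in the scope of $\vee$; (4) there is no surface occurrence of $A_1\vee\dots\vee A_n$ with both $p$ and $\neg p$ among $A_1,\dots,A_n$ for some letter $p$; (5) no surface occurrence of $\top$ unless $D=\top$; (6) if $D$ is $A_1\wedge\dots\wedge A_n$ ($n\ge2$, any bracketing)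 then some $A_i$ is not of the form $B\sqcap^cC$; (7) if $D$ is $A\sqcap^cB$ then neither $A$ nor $B$ contains $c$. Purification procedure applied to $D$: Stages 1–7 in order, each a loop iterated until it no longer modifies $D$; the final $D$ is returned. Stage 1: a surface occurrence of $\bot\vee A$ or $A\vee\bot$ is changed to $A$; next, of $\bot\wedge A$ or $A\wedge\bot$ to $\bot$. Stage 2: a surface occurrence of $(A\wedge B)\vee C$ or $C\vee(A\wedge B)$ is changed to $(A\vee C)\wedge(B\vee C)$. Stage 3: a surface occurrence of $(A\sqcap^cB)\vee C$ or $C\vee(A\sqcap^cB)$ is changed to $(A\vee C)\sqcap^c(B\vee C)$. Stage 4: a surface occurrence of $A_1\vee\dots\vee A_n$ with both $p,\neg p$ among the $A_i$ is changed to $\top$. Stage 5: a surface occurrence of $\top\vee A$ or $A\vee\top$ is changed to $\top$; next, of $\top\wedge A$ or $A\wedge\top$ to $A$. Stage 6: a surface occurrence of $(A\sqcap^aB)\wedge(E\sqcap^bF)$ is changed to $\big((A\wedge(E\sqcap^bF))\sqcap^a(B\wedge(E\sqcap^bF))\big)\sqcap^c\big(((A\sqcap^aB)\wedge E)\sqcap^b((A\sqcap^aB)\wedge F)\big)$ with $c$ a conjunctive cluster not occurring in $D$. Stage 7: if $D$ is $X[E\sqcap^cF]\sqcap^cA$ (resp. $A\sqcap^cX[E\sqcap^cF]$), change it to $X[E]\sqcap^cA$ (resp. $A\sqcap^cX[F]$). *)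

theory Defs
  imports Main
begin

text \<open>Clusters: disjunctive clusters Disj n and conjunctive clusters Conj n (two disjoint
infinite sets).  Elementary letters are natural numbers.\<close>

datatype cluster = Disj nat | Conj nat

text \<open>Cand c A B is A \<sqinter>^(Conj c) B; Cor c A B is A \<squnion>^(Disj c) B.\<close>

datatype cirq = Top | Bot | Pos nat | Neg nat
  | Or cirq cirq | And cirq cirq
  | Cand nat cirq cirq
  | Cor nat cirq cirq

fun clusters :: "cirq \<Rightarrow> cluster set" where
  "clusters (Or A B) = clusters A \<union> clusters B"
| "clusters (And A B) = clusters A \<union> clusters B"
| "clusters (Cand c A B) = {Conj c} \<union> clusters A \<union> clusters B"
| "clusters (Cor c A B) = {Disj c} \<union> clusters A \<union> clusters B"
| "clusters _ = {}"

datatype player = PTop | PBot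

text \<open>A move c.i is the pair (c, i) with False standing for 0 and True for 1.\<close>
type_synonym move = "cluster \<times> bool"
type_synonym lmove = "player \<times> move"

fun label_ok :: "lmove \<Rightarrow> bool" where
  "label_ok (p, (Disj _, _)) = (p = PTop)"
| "label_ok (p, (Conj _, _)) = (p = PBot)"

definition legal_list :: "lmove list \<Rightarrow> bool" where
  "legal_list l \<longleftrightarrow> (\<forall>i<length l. label_ok (l ! i) \<and>
      (\<forall>j<i. fst (snd (l ! j)) \<noteq> fst (snd (l ! i))))"

text \<open>Winning a legal run, given the set of (unlabelled) moves it contains
(a legal run contains at most one move per cluster).  An interpretation maps letters to
True (= \<top>) or False (= \<bottom>).\<close>

fun wins :: "(nat \<Rightarrow> bool) \<Rightarrow> move set \<Rightarrow> cirq \<Rightarrow> bool" where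
  "wins I M Top = True"
| "wins I M Bot = False"
| "wins I M (Pos p) = I p"
| "wins I M (Neg p) = (\<not> I p)"
| "wins I M (Or A B) = (wins I M A \<or> wins I M B)"
| "wins I M (And A B) = (wins I M A \<and> wins I M B)"
| "wins I M (Cor c A B) =
     (((Disj c, False) \<in> M \<and> wins I M A) \<or> ((Disj c, True) \<in> M \<and> wins I M B))"
| "wins I M (Cand c A B) =
     (if (Conj c, False) \<in> M then wins I M A
      else if (Conj c, True) \<in> M then wins I M B else True)"

text \<open>A (finite or infinite) run is given by the increasing chain R 0, R 1, ... of its
finite initial segments; the run is their limit.\<close>

definition won_run :: "(nat \<Rightarrow> bool) \<Rightarrow> cirq \<Rightarrow> (nat \<Rightarrow> lmove list) \<Rightarrow> bool" where
  "won_run I C R \<longleftrightarrow>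
     (if \<forall>t. legal_list (R t)
      then wins I (\<Union>t. snd ` set (R t)) C
      else (\<exists>t. \<not> legal_list (R t) \<and>
              fst (R t ! (LEAST k. \<not> legal_list (take (Suc k) (R t)))) = PBot))"

text \<open>Machines (HPMs), modelled as deterministic devices: at each clock cycle the machine,
as a function of the history of run-tape contents observed so far, makes at most one move;
the environment may make any finite list of moves at each cycle.\<close>

type_synonym machine = "lmove list list \<Rightarrow> move option"
type_synonym environment = "nat \<Rightarrow> move list"

primrec hist :: "machine \<Rightarrow> environment \<Rightarrow> nat \<Rightarrow> lmove list list" where
  "hist M E 0 = [[]]"
| "hist M E (Suc t) =
     (let h = hist M E t; r = last h
      in h @ [r @ (case M h of None \<Rightarrow> [] | Some m \<Rightarrow> [(PTop, m)])
                @ map (\<lambda>m. (PBot, m)) (E t)])"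

definition run_tape :: "machine \<Rightarrow> environment \<Rightarrow> nat \<Rightarrow> lmove list" where
  "run_tape M E t = last (hist M E t)"

definition valid :: "cirq \<Rightarrow> bool" where
  "valid C \<longleftrightarrow> (\<exists>M. \<forall>I E. won_run I C (run_tape M E))"

datatype ctx = Hole
  | COrL ctx cirq | COrR cirq ctx
  | CAndL ctx cirq | CAndR cirq ctx
  | CCandL nat ctx cirq | CCandR nat cirq ctx
  | CCorL nat ctx cirq | CCorR nat cirq ctx

fun fill :: "ctx \<Rightarrow> cirq \<Rightarrow> cirq" where
  "fill Hole E = E"
| "fill (COrL X B) E = Or (fill X E) B"
| "fill (COrR A X) E = Or A (fill X E)"
| "fill (CAndL X B) E = And (fill X E) B"
| "fill (CAndR A X) E = And A (fill X E)"
| "fill (CCandL c X B) E = Cand c (fill X E) B"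
| "fill (CCandR c A X) E = Cand c A (fill X E)"
| "fill (CCorL c X B) E = Cor c (fill X E) B"
| "fill (CCorR c A X) E = Cor c A (fill X E)"

fun surface_ctx :: "ctx \<Rightarrow> bool" where
  "surface_ctx Hole = True"
| "surface_ctx (COrL X _) = surface_ctx X"
| "surface_ctx (COrR _ X) = surface_ctx X"
| "surface_ctx (CAndL X _) = surface_ctx X"
| "surface_ctx (CAndR _ X) = surface_ctx X"
| "surface_ctx _ = False"

fun resolve :: "nat \<Rightarrow> bool \<Rightarrow> cirq \<Rightarrow> cirq" where
  "resolve c b (Or A B) = Or (resolve c b A) (resolve c b B)"
| "resolve c b (And A B) = And (resolve c b A) (resolve c b B)"
| "resolve c b (Cand d A B) = Cand d (resolve c b A) (resolve c b B)"
| "resolve c b (Cor d A B) =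
     (if d = c then (if b then resolve c b B else resolve c b A)
      else Cor d (resolve c b A) (resolve c b B))"
| "resolve c b X = X"

text \<open>One-premise rules: rule1 P Q means P \<leadsto> Q.\<close>
inductive rule1 :: "cirq \<Rightarrow> cirq \<Rightarrow> bool" where
  comm_or: "rule1 (fill X (Or B A)) (fill X (Or A B))"
| comm_and: "rule1 (fill X (And B A)) (fill X (And A B))"
| assoc_or: "rule1 (fill X (Or A (Or B C))) (fill X (Or (Or A B) C))"
| assoc_and: "rule1 (fill X (And A (And B C))) (fill X (And (And A B) C))"
| ident_or: "rule1 (fill X A) (fill X (Or A Bot))"
| ident_and: "rule1 (fill X A) (fill X (And A Top))"
| dom_or: "rule1 (fill X Top) (fill X (Or A Top))"
| dom_and: "rule1 (fill X Bot) (fill X (And A Bot))"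
| choosing: "rule1 (resolve c b C) C"
| cleansing_l: "rule1 (fill X (Cand c (fill Y A) C)) (fill X (Cand c (fill Y (Cand c A B)) C))"
| cleansing_r: "rule1 (fill X (Cand c C (fill Y B))) (fill X (Cand c C (fill Y (Cand c A B))))"
| distr_and: "rule1 (fill X (And (Or A C) (Or B C))) (fill X (Or (And A B) C))"
| distr_cand: "rule1 (fill X (Cand c (Or A C) (Or B C))) (fill X (Or (Cand c A B) C))"
| trivialization: "rule1 (fill X Top) (fill X (Or (Neg p) (Pos p)))"
| quadrilemma: "Conj c \<notin> clusters (fill X (And (Cand a A B) (Cand b C D))) \<Longrightarrow>
    rule1 (fill X (Cand c (Cand a (And A (Cand b C D)) (And B (Cand b C D)))
                          (Cand b (And (Cand a A B) C) (And (Cand a A B) D))))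
          (fill X (And (Cand a A B) (Cand b C D)))"

inductive provable :: "cirq \<Rightarrow> bool" where
  axiom: "provable Top"
| by_rule1: "provable P \<Longrightarrow> rule1 P C \<Longrightarrow> provable C"
| splitting: "provable A \<Longrightarrow> provable B \<Longrightarrow> Conj c \<notin> clusters A \<Longrightarrow> Conj c \<notin> clusters B
     \<Longrightarrow> provable (Cand c A B)"

text \<open>tet a n is the tetration of height n (tet a 0 = 1, so tet a 1 = a).\<close>
primrec tet :: "nat \<Rightarrow> nat \<Rightarrow> nat" where
  "tet a 0 = 1"
| "tet a (Suc n) = a ^ tet a n"

fun rank :: "cirq \<Rightarrow> nat" where
  "rank (Cor c A B) = rank A + rank B"
| "rank (Cand c A B) = rank A + rank B"
| "rank (And A B) = 5 ^ (rank A + rank B)"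
| "rank (Or A B) = tet 5 (rank A + rank B)"
| "rank _ = 1"

fun surf_subs :: "cirq \<Rightarrow> cirq set" where
  "surf_subs (Or A B) = {Or A B} \<union> surf_subs A \<union> surf_subs B"
| "surf_subs (And A B) = {And A B} \<union> surf_subs A \<union> surf_subs B"
| "surf_subs X = {X}"

fun disjuncts :: "cirq \<Rightarrow> cirq set" where
  "disjuncts (Or A B) = disjuncts A \<union> disjuncts B"
| "disjuncts X = {X}"

fun conjuncts :: "cirq \<Rightarrow> cirq set" where
  "conjuncts (And A B) = conjuncts A \<union> conjuncts B"
| "conjuncts X = {X}"

fun is_cand :: "cirq \<Rightarrow> bool" where
  "is_cand (Cand _ _ _) = True"
| "is_cand _ = False"

definition pure :: "cirq \<Rightarrow> bool" where
  "pure D \<longleftrightarrow>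
     (Bot \<in> surf_subs D \<longrightarrow> D = Bot) \<and>
     (\<forall>A B E F. Or A B \<in> surf_subs D \<longrightarrow> And E F \<notin> surf_subs A \<union> surf_subs B) \<and>
     (\<forall>A B c E F. Or A B \<in> surf_subs D \<longrightarrow> Cand c E F \<notin> surf_subs A \<union> surf_subs B) \<and>
     (\<forall>A B p. Or A B \<in> surf_subs D \<longrightarrow>
         \<not> (Pos p \<in> disjuncts (Or A B) \<and> Neg p \<in> disjuncts (Or A B))) \<and>
     (Top \<in> surf_subs D \<longrightarrow> D = Top) \<and>
     (\<forall>A B. D = And A B \<longrightarrow> (\<exists>E\<in>conjuncts D. \<not> is_cand E)) \<and>
     (\<forall>c A B. D = Cand c A B \<longrightarrow> Conj c \<notin> clusters A \<and> Conj c \<notin> clusters B)"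

definition s1a :: "cirq \<Rightarrow> cirq \<Rightarrow> bool" where
  "s1a D D' \<longleftrightarrow> (\<exists>X A. surface_ctx X \<and>
     (D = fill X (Or Bot A) \<or> D = fill X (Or A Bot)) \<and> D' = fill X A)"

definition s1b :: "cirq \<Rightarrow> cirq \<Rightarrow> bool" where
  "s1b D D' \<longleftrightarrow> (\<exists>X A. surface_ctx X \<and>
     (D = fill X (And Bot A) \<or> D = fill X (And A Bot)) \<and> D' = fill X Bot)"

definition s2 :: "cirq \<Rightarrow> cirq \<Rightarrow> bool" where
  "s2 D D' \<longleftrightarrow> (\<exists>X A B C. surface_ctx X \<and>
     (D = fill X (Or (And A B) C) \<or> D = fill X (Or C (And A B))) \<and>
     D' = fill X (And (Or A C) (Or B C)))"

definition s3 :: "cirq \<Rightarrow> cirq \<Rightarrow> bool" where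
  "s3 D D' \<longleftrightarrow> (\<exists>X c A B C. surface_ctx X \<and>
     (D = fill X (Or (Cand c A B) C) \<or> D = fill X (Or C (Cand c A B))) \<and>
     D' = fill X (Cand c (Or A C) (Or B C)))"

definition s4 :: "cirq \<Rightarrow> cirq \<Rightarrow> bool" where
  "s4 D D' \<longleftrightarrow> (\<exists>X A B p. surface_ctx X \<and> D = fill X (Or A B) \<and>
     Pos p \<in> disjuncts (Or A B) \<and> Neg p \<in> disjuncts (Or A B) \<and> D' = fill X Top)"

definition s5a :: "cirq \<Rightarrow> cirq \<Rightarrow> bool" where
  "s5a D D' \<longleftrightarrow> (\<exists>X A. surface_ctx X \<and>
     (D = fill X (Or Top A) \<or> D = fill X (Or A Top)) \<and> D' = fill X Top)"

definition s5b :: "cirq \<Rightarrow> cirq \<Rightarrow> bool" where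
  "s5b D D' \<longleftrightarrow> (\<exists>X A. surface_ctx X \<and>
     (D = fill X (And Top A) \<or> D = fill X (And A Top)) \<and> D' = fill X A)"

definition s6 :: "cirq \<Rightarrow> cirq \<Rightarrow> bool" where
  "s6 D D' \<longleftrightarrow> (\<exists>X a A B b E F c. surface_ctx X \<and>
     D = fill X (And (Cand a A B) (Cand b E F)) \<and> Conj c \<notin> clusters D \<and>
     D' = fill X (Cand c (Cand a (And A (Cand b E F)) (And B (Cand b E F)))
                         (Cand b (And (Cand a A B) E) (And (Cand a A B) F))))"

definition s7 :: "cirq \<Rightarrow> cirq \<Rightarrow> bool" where
  "s7 D D' \<longleftrightarrow> (\<exists>X c E F A.
     (D = Cand c (fill X (Cand c E F)) A \<and> D' = Cand c (fill X E) A) \<or>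
     (D = Cand c A (fill X (Cand c E F)) \<and> D' = Cand c A (fill X F)))"

definition opt_step :: "(cirq \<Rightarrow> cirq \<Rightarrow> bool) \<Rightarrow> cirq \<Rightarrow> cirq \<Rightarrow> bool" where
  "opt_step r D D' \<longleftrightarrow> (if \<exists>E. r D E then r D D' else D' = D)"

definition loop :: "(cirq \<Rightarrow> cirq \<Rightarrow> bool) \<Rightarrow> cirq \<Rightarrow> cirq \<Rightarrow> bool" where
  "loop it D D' \<longleftrightarrow> it\<^sup>*\<^sup>* D D' \<and> (\<forall>D''. it D' D'' \<longrightarrow> D'' = D')"

definition purification :: "cirq \<Rightarrow> cirq \<Rightarrow> bool" where
  "purification A B \<longleftrightarrow> (\<exists>D1 D2 D3 D4 D5 D6.
     loop (opt_step s1a OO opt_step s1b) A D1 \<and>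
     loop (opt_step s2) D1 D2 \<and>
     loop (opt_step s3) D2 D3 \<and>
     loop (opt_step s4) D3 D4 \<and>
     loop (opt_step s5a OO opt_step s5b) D4 D5 \<and>
     loop (opt_step s6) D5 D6 \<and>
     loop (opt_step s7) D6 B)"

end

theory Submission
  imports Defs
begin



fun cc :: "ctx \<Rightarrow> ctx \<Rightarrow> ctx" where
  "cc Hole Y = Y"
| "cc (COrL X B) Y = COrL (cc X Y) B"
| "cc (COrR A X) Y = COrR A (cc X Y)"
| "cc (CAndL X B) Y = CAndL (cc X Y) B"
| "cc (CAndR A X) Y = CAndR A (cc X Y)"
| "cc (CCandL c X B) Y = CCandL c (cc X Y) B"
| "cc (CCandR c A X) Y = CCandR c A (cc X Y)"
| "cc (CCorL c X B) Y = CCorL c (cc X Y) B"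
| "cc (CCorR c A X) Y = CCorR c A (cc X Y)"

lemma fill_cc[simp]: "fill (cc X Y) E = fill X (fill Y E)"
  by (induction X) auto

lemma surface_cc[simp]: "surface_ctx (cc X Y) = (surface_ctx X \<and> surface_ctx Y)"
  by (induction X) auto

definition RR :: "cirq \<Rightarrow> cirq \<Rightarrow> bool" where
  "RR P Q \<longleftrightarrow> (\<forall>X. rule1\<^sup>*\<^sup>* (fill X P) (fill X Q))"

lemma RR_refl: "RR P P" by (simp add: RR_def)

lemma RR_trans: "RR P Q \<Longrightarrow> RR Q S \<Longrightarrow> RR P S"
  unfolding RR_def by (meson rtranclp_trans)

lemma RR_ctx: "RR P Q \<Longrightarrow> RR (fill Y P) (fill Y Q)"
  unfolding RR_def by (metis fill_cc)

lemma RR_rule: "(\<And>X. rule1 (fill X P) (fill X Q)) \<Longrightarrow> RR P Q"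
  unfolding RR_def by blast

lemma RR_comm: "RR (Or B A) (Or A B)" by (rule RR_rule, rule comm_or)
lemma RR_comm_and: "RR (And B A) (And A B)" by (rule RR_rule, rule comm_and)
lemma RR_assoc: "RR (Or A (Or B C)) (Or (Or A B) C)" by (rule RR_rule, rule assoc_or)

lemmas RR_trans' [trans] = RR_trans

lemma disj_atom: "x \<in> disjuncts A \<Longrightarrow> disjuncts x = {x}"
  by (induction A) auto

lemma RR_assoc_rev: "RR (Or (Or X Y) Z) (Or X (Or Y Z))"
proof -
  have "RR (Or (Or X Y) Z) (Or Z (Or X Y))" by (rule RR_comm)
  also have "RR \<dots> (Or (Or Z X) Y)" by (rule RR_assoc)
  also have "RR \<dots> (Or Y (Or Z X))" by (rule RR_comm)
  also have "RR \<dots> (Or (Or Y Z) X)" by (rule RR_assoc)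
  also have "RR \<dots> (Or X (Or Y Z))" by (rule RR_comm)
  finally show ?thesis .
qed


lemma RR_swap_in: "RR (Or (Or X Y) Z) (Or (Or X Z) Y)"
proof -
  have "RR (Or (Or X Y) Z) (Or X (Or Y Z))" by (rule RR_assoc_rev)
  also have "RR \<dots> (Or X (Or Z Y))" using RR_ctx[OF RR_comm, of "COrR X Hole"] by simp
  also have "RR \<dots> (Or (Or X Z) Y)" by (rule RR_assoc)
  finally show ?thesis .
qed

lemma pull_out:
  "Q \<in> disjuncts A \<Longrightarrow> A \<noteq> Q \<Longrightarrow> \<exists>A'. RR (Or A' Q) A \<and> disjuncts A \<subseteq> disjuncts A' \<union> {Q}"
proof (induction A)
  case (Or A1 A2)
  show ?case
  proof (cases "Q \<in> disjuncts A1")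
    case True
    show ?thesis
    proof (cases "A1 = Q")
      case True
      then show ?thesis using RR_comm[of A2 Q] disj_atom[OF Or.prems(1)]
        by (intro exI[of _ A2]) auto
    next
      case False
      with Or.IH(1) \<open>Q \<in> disjuncts A1\<close> obtain A1' where
        h: "RR (Or A1' Q) A1" "disjuncts A1 \<subseteq> disjuncts A1' \<union> {Q}" by blast
      have "RR (Or (Or A1' A2) Q) (Or (Or A1' Q) A2)" by (rule RR_swap_in)
      also have "RR \<dots> (Or A1 A2)" using RR_ctx[OF h(1), of "COrL Hole A2"] by simp
      finally show ?thesis using h(2) by (intro exI[of _ "Or A1' A2"]) auto
    qed
  next
    case False
    then have q2: "Q \<in> disjuncts A2" using Or.prems by auto
    show ?thesis
    proof (cases "A2 = Q")
      case True
      then show ?thesis using RR_refl disj_atom[OF Or.prems(1)] by (intro exI[of _ A1]) auto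
    next
      case False
      with Or.IH(2) q2 obtain A2' where
        h: "RR (Or A2' Q) A2" "disjuncts A2 \<subseteq> disjuncts A2' \<union> {Q}" by blast
      have "RR (Or (Or A1 A2') Q) (Or A1 (Or A2' Q))" by (rule RR_assoc_rev)
      also have "RR \<dots> (Or A1 A2)" using RR_ctx[OF h(1), of "COrR A1 Hole"] by simp
      finally show ?thesis using h(2) by (intro exI[of _ "Or A1 A2'"]) auto
    qed
  qed
qed auto

lemma RR_triv: "Pos p \<in> disjuncts T \<Longrightarrow> Neg p \<in> disjuncts T \<Longrightarrow> RR Top T"
proof -
  assume P: "Pos p \<in> disjuncts T" and N: "Neg p \<in> disjuncts T"
  have "T \<noteq> Pos p" using N by auto
  with P pull_out obtain T' where h1: "RR (Or T' (Pos p)) T" "disjuncts T \<subseteq> disjuncts T' \<union> {Pos p}"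
    by blast
  have N': "Neg p \<in> disjuncts T'" using h1(2) N by auto
  show "RR Top T"
  proof (cases "T' = Neg p")
    case True
    have "RR Top (Or (Neg p) (Pos p))" by (rule RR_rule, rule trivialization)
    then show ?thesis using h1(1) True RR_trans by blast
  next
    case False
    with N' pull_out obtain T'' where h2: "RR (Or T'' (Neg p)) T'" by blast
    have "RR Top (Or T'' Top)" by (rule RR_rule, rule dom_or)
    also have "RR \<dots> (Or T'' (Or (Neg p) (Pos p)))"
      using RR_ctx[OF RR_rule[OF trivialization], of "COrR T'' Hole"] by simp
    also have "RR \<dots> (Or (Or T'' (Neg p)) (Pos p))" by (rule RR_assoc)
    also have "RR \<dots> (Or T' (Pos p))" using RR_ctx[OF h2, of "COrL Hole (Pos p)"] by simp
    also have "RR \<dots> T" by (rule h1(1))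
    finally show ?thesis .
  qed
qed

lemma RR_fill: "RR P Q \<Longrightarrow> rule1\<^sup>*\<^sup>* (fill X P) (fill X Q)"
  unfolding RR_def by blast

lemma provable_rtc: "rule1\<^sup>*\<^sup>* P Q \<Longrightarrow> provable P \<Longrightarrow> provable Q"
  by (induction rule: rtranclp_induct) (auto intro: by_rule1)

section \<open>Rank\<close>

lemma lt_pow5: "n < (5::nat) ^ n"
  by (induction n) auto

lemma tet_ge: "n < tet 5 n"
proof (induction n)
  case (Suc n)
  have "tet 5 n < 5 ^ tet 5 n" by (simp add: lt_pow5)
  with Suc show ?case by simp
qed simp

lemma tet_pos: "Suc 0 \<le> tet 5 n" using tet_ge[of n] by simp

lemma tet_mono: "m \<le> n \<Longrightarrow> tet 5 m \<le> tet 5 n"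
proof -
  have "tet 5 k \<le> tet 5 (Suc k)" for k using lt_pow5[of "tet 5 k"] by simp
  then show "m \<le> n \<Longrightarrow> tet 5 m \<le> tet 5 n" by (rule lift_Suc_mono_le)
qed

lemma rank_pos: "1 \<le> rank C"
  by (induction C) (auto simp: tet_pos)

lemma rank_fill_mono: "rank E' \<le> rank E \<Longrightarrow> rank (fill X E') \<le> rank (fill X E)"
  by (induction X) (auto intro: tet_mono power_increasing)

lemma two_le_pow5: "2 * x \<le> (5::nat) ^ x"
proof (induction x)
  case (Suc x)
  then show ?case by (cases x) auto
qed simp

lemma tet_sum: "1 \<le> a \<Longrightarrow> 1 \<le> b \<Longrightarrow> tet 5 (a + c) + tet 5 (b + c) \<le> tet 5 (a + b + c)"
proof -
  assume a: "1 \<le> a" and b: "1 \<le> b"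
  define m where "m = a + b + c - 1"
  have m: "a + b + c = Suc m" using a b unfolding m_def by simp
  have "tet 5 (a + c) \<le> tet 5 m" "tet 5 (b + c) \<le> tet 5 m"
    using a b by (auto intro: tet_mono simp: m_def)
  then have "tet 5 (a + c) + tet 5 (b + c) \<le> 2 * tet 5 m" by simp
  also have "\<dots> \<le> tet 5 (Suc m)" using two_le_pow5 by simp
  finally show ?thesis using m by simp
qed

lemma rank_s2: "rank (And (Or A C) (Or B C)) \<le> rank (Or (And A B) C)"
proof -
  let ?a = "rank A" and ?b = "rank B" and ?c = "rank C"
  have s: "tet 5 (?a + ?c) + tet 5 (?b + ?c) \<le> tet 5 (?a + ?b + ?c)"
    using rank_pos tet_sum by blast
  define n where "n = 5 ^ (?a + ?b) + ?c"
  have "?a + ?b < 5 ^ (?a + ?b)" by (simp add: lt_pow5)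
  then have n: "n = Suc (n - 1)" "?a + ?b + ?c \<le> n - 1" unfolding n_def by auto
  have "rank (And (Or A C) (Or B C)) = 5 ^ (tet 5 (?a + ?c) + tet 5 (?b + ?c))" by simp
  also have "\<dots> \<le> 5 ^ tet 5 (?a + ?b + ?c)" using s by (intro power_increasing) auto
  also have "\<dots> \<le> 5 ^ tet 5 (n - 1)" using n by (intro power_increasing tet_mono) auto
  also have "\<dots> = tet 5 n" by (subst n(1)) simp
  also have "\<dots> = rank (Or (And A B) C)" by (simp add: n_def)
  finally show ?thesis .
qed

lemma rank_s3: "rank (Cand c (Or A C) (Or B C)) \<le> rank (Or (Cand c A B) C)"
  using tet_sum[OF rank_pos[of A] rank_pos[of B], of "rank C"] by simp

lemma rank_s6: "rank (Cand c (Cand a (And A (Cand b E F)) (And B (Cand b E F)))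
                         (Cand b (And (Cand a A B) E) (And (Cand a A B) F)))
   \<le> rank (And (Cand a A B) (Cand b E F))"
proof -
  define ra rb re rf where "ra = rank A" "rb = rank B" "re = rank E" "rf = rank F"
  have pos: "1 \<le> ra" "1 \<le> rb" "1 \<le> re" "1 \<le> rf"
    unfolding ra_rb_re_rf_def using rank_pos[of A] rank_pos[of B] rank_pos[of E] rank_pos[of F] by auto
  define S where "S = ra + rb + re + rf - 1"
  have "(5::nat) ^ (ra + (re + rf)) \<le> 5 ^ S" "(5::nat) ^ (rb + (re + rf)) \<le> 5 ^ S"
       "(5::nat) ^ (ra + rb + re) \<le> 5 ^ S" "(5::nat) ^ (ra + rb + rf) \<le> 5 ^ S"
    using pos unfolding S_def by (intro power_increasing; simp)+
  moreover have "(5::nat) ^ (ra + rb + (re + rf)) = 5 * 5 ^ S"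
    using pos unfolding S_def by (metis Suc_diff_1 add_gr_0 less_le_trans zero_less_one power_Suc add.assoc)
  ultimately show ?thesis unfolding ra_rb_re_rf_def by (simp only: rank.simps)
qed

lemma rank_or_ge: "rank B \<le> rank (Or A B)" "rank A \<le> rank (Or A B)"
  using tet_ge[of "rank A + rank B"] by auto

lemma rank_and_ge: "rank B \<le> rank (And A B)" "rank A \<le> rank (And A B)"
proof -
  have "rank A + rank B < 5 ^ (rank A + rank B)" by (simp add: lt_pow5)
  then show "rank B \<le> rank (And A B)" "rank A \<le> rank (And A B)" by auto
qed

lemma wins_fill_eq: "wins I M E = wins I M E' \<Longrightarrow> wins I M (fill X E) = wins I M (fill X E')"
  by (induction X) auto

lemma wins_fill_mono: "(wins I M E \<Longrightarrow> wins I M E') \<Longrightarrow> wins I M (fill X E) \<Longrightarrow> wins I M (fill X E')"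
  by (induction X) (auto split: if_splits)

lemma valid_eq: "(\<And>I M. wins I M D = wins I M D') \<Longrightarrow> valid D = valid D'"
  unfolding valid_def won_run_def by simp

lemma valid_mono: "(\<And>I M. wins I M D \<Longrightarrow> wins I M D') \<Longrightarrow> valid D \<Longrightarrow> valid D'"
  unfolding valid_def won_run_def by (smt (verit))

lemma wins_disj: "wins I M T = (\<exists>d\<in>disjuncts T. wins I M d)"
  by (induction T) auto




section \<open>Steps are good\<close>

definition good :: "cirq \<Rightarrow> cirq \<Rightarrow> bool" where
  "good D D' \<longleftrightarrow> (provable D' \<longrightarrow> provable D) \<and> (valid D \<longleftrightarrow> valid D') \<and> rank D' \<le> rank D"

lemma good_refl: "good D D" by (simp add: good_def)

lemma good_trans: "good D1 D2 \<Longrightarrow> good D2 D3 \<Longrightarrow> good D1 D3"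
  unfolding good_def by auto

lemma goodI:
  assumes "RR E' E" "\<And>I M. wins I M E = wins I M E'" "rank E' \<le> rank E"
  shows "good (fill X E) (fill X E')"
proof -
  have "provable (fill X E') \<longrightarrow> provable (fill X E)"
    using RR_fill[OF assms(1), of X] provable_rtc by blast
  moreover have "valid (fill X E) = valid (fill X E')"
    by (rule valid_eq, rule wins_fill_eq, rule assms(2))
  moreover have "rank (fill X E') \<le> rank (fill X E)" by (rule rank_fill_mono, rule assms(3))
  ultimately show ?thesis unfolding good_def by blast
qed

lemma good_s1a: "s1a D D' \<Longrightarrow> good D D'"
  unfolding s1a_def
proof (elim exE conjE disjE)
  fix X A assume h: "D = fill X (Or Bot A)" "D' = fill X A"
  have "good (fill X (Or Bot A)) (fill X A)"
    by (rule goodI[OF RR_trans[OF RR_rule[OF ident_or] RR_comm] _ rank_or_ge(1)[where A=Bot and B=A]]) simp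
  then show ?thesis using h by simp
next
  fix X A assume h: "D = fill X (Or A Bot)" "D' = fill X A"
  have "good (fill X (Or A Bot)) (fill X A)"
    by (rule goodI[OF RR_rule[OF ident_or] _ rank_or_ge(2)[where A=A and B=Bot]]) simp
  then show ?thesis using h by simp
qed

lemma good_s1b: "s1b D D' \<Longrightarrow> good D D'"
  unfolding s1b_def
proof (elim exE conjE disjE)
  fix X A assume h: "D = fill X (And Bot A)" "D' = fill X Bot"
  have "good (fill X (And Bot A)) (fill X Bot)"
    by (rule goodI[OF RR_trans[OF RR_rule[OF dom_and] RR_comm_and] _ rank_and_ge(2)[where A=Bot and B=A]]) simp
  then show ?thesis using h by simp
next
  fix X A assume h: "D = fill X (And A Bot)" "D' = fill X Bot"
  have "good (fill X (And A Bot)) (fill X Bot)"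
    by (rule goodI[OF RR_rule[OF dom_and] _ rank_and_ge(1)[where A=A and B=Bot]]) simp
  then show ?thesis using h by simp
qed

lemma good_s2: "s2 D D' \<Longrightarrow> good D D'"
  unfolding s2_def
proof (elim exE conjE disjE)
  fix X A B C assume h: "D = fill X (Or (And A B) C)" "D' = fill X (And (Or A C) (Or B C))"
  have "good (fill X (Or (And A B) C)) (fill X (And (Or A C) (Or B C)))"
    by (rule goodI[OF RR_rule[OF distr_and] _ rank_s2]) auto
  then show ?thesis using h by simp
next
  fix X A B C assume h: "D = fill X (Or C (And A B))" "D' = fill X (And (Or A C) (Or B C))"
  have r: "rank (And (Or A C) (Or B C)) \<le> rank (Or C (And A B))"
    using rank_s2[of A C B] by (simp only: rank.simps add.commute)
  have "good (fill X (Or C (And A B))) (fill X (And (Or A C) (Or B C)))"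
    by (rule goodI[OF RR_trans[OF RR_rule[OF distr_and] RR_comm] _ r]) auto
  then show ?thesis using h by simp
qed

lemma good_s3: "s3 D D' \<Longrightarrow> good D D'"
  unfolding s3_def
proof (elim exE conjE disjE)
  fix X c A B C assume h: "D = fill X (Or (Cand c A B) C)" "D' = fill X (Cand c (Or A C) (Or B C))"
  have "good (fill X (Or (Cand c A B) C)) (fill X (Cand c (Or A C) (Or B C)))"
    by (rule goodI[OF RR_rule[OF distr_cand] _ rank_s3]) auto
  then show ?thesis using h by simp
next
  fix X c A B C assume h: "D = fill X (Or C (Cand c A B))" "D' = fill X (Cand c (Or A C) (Or B C))"
  have r: "rank (Cand c (Or A C) (Or B C)) \<le> rank (Or C (Cand c A B))"
    using rank_s3[of c A C B] by (simp only: rank.simps add.commute)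
  have "good (fill X (Or C (Cand c A B))) (fill X (Cand c (Or A C) (Or B C)))"
    by (rule goodI[OF RR_trans[OF RR_rule[OF distr_cand] RR_comm] _ r]) auto
  then show ?thesis using h by simp
qed

lemma good_s4: "s4 D D' \<Longrightarrow> good D D'"
  unfolding s4_def
proof (elim exE conjE disjE)
  fix X A B p assume h: "D = fill X (Or A B)" "Pos p \<in> disjuncts (Or A B)"
    "Neg p \<in> disjuncts (Or A B)" "D' = fill X Top"
  have w: "wins I M (Or A B) = wins I M Top" for I M
  proof -
    have "wins I M (Pos p) \<or> wins I M (Neg p)" by simp
    then have "\<exists>d\<in>disjuncts (Or A B). wins I M d" using h(2,3) by blast
    then have "wins I M (Or A B)" using wins_disj[of I M "Or A B"] by blast
    then show ?thesis by simp
  qed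
  have r: "rank Top \<le> rank (Or A B)" using rank_pos[of "Or A B"] by simp
  have "good (fill X (Or A B)) (fill X Top)"
    by (rule goodI[OF RR_triv[OF h(2,3)] w r])
  then show ?thesis using h by simp
qed

lemma good_s5a: "s5a D D' \<Longrightarrow> good D D'"
  unfolding s5a_def
proof (elim exE conjE disjE)
  fix X A assume h: "D = fill X (Or Top A)" "D' = fill X Top"
  have r: "rank Top \<le> rank (Or Top A)" using rank_pos[of "Or Top A"] by simp
  have "good (fill X (Or Top A)) (fill X Top)"
    by (rule goodI[OF RR_trans[OF RR_rule[OF dom_or] RR_comm] _ r]) simp
  then show ?thesis using h by simp
next
  fix X A assume h: "D = fill X (Or A Top)" "D' = fill X Top"
  have r: "rank Top \<le> rank (Or A Top)" using rank_pos[of "Or A Top"] by simp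
  have "good (fill X (Or A Top)) (fill X Top)"
    by (rule goodI[OF RR_rule[OF dom_or] _ r]) simp
  then show ?thesis using h by simp
qed

lemma good_s5b: "s5b D D' \<Longrightarrow> good D D'"
  unfolding s5b_def
proof (elim exE conjE disjE)
  fix X A assume h: "D = fill X (And Top A)" "D' = fill X A"
  have "good (fill X (And Top A)) (fill X A)"
    by (rule goodI[OF RR_trans[OF RR_rule[OF ident_and] RR_comm_and] _ rank_and_ge(1)[where A=Top and B=A]]) simp
  then show ?thesis using h by simp
next
  fix X A assume h: "D = fill X (And A Top)" "D' = fill X A"
  have "good (fill X (And A Top)) (fill X A)"
    by (rule goodI[OF RR_rule[OF ident_and] _ rank_and_ge(2)[where A=A and B=Top]]) simp
  then show ?thesis using h by simp
qed

lemma good_s7: "s7 D D' \<Longrightarrow> good D D'"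
  unfolding s7_def
proof (elim exE conjE disjE)
  fix X c E F A assume h: "D = Cand c (fill X (Cand c E F)) A" "D' = Cand c (fill X E) A"
  have "rule1 (fill Hole (Cand c (fill X E) A)) (fill Hole (Cand c (fill X (Cand c E F)) A))"
    by (rule cleansing_l)
  then have "provable D' \<longrightarrow> provable D" using h by (auto intro: by_rule1)
  moreover have "wins I M D = wins I M D'" for I M
    using h wins_fill_eq[of I M "Cand c E F" E X] by auto
  moreover have "rank D' \<le> rank D" using h rank_fill_mono[of E "Cand c E F" X] by simp
  ultimately show ?thesis unfolding good_def using valid_eq by blast
next
  fix X c E F A assume h: "D = Cand c A (fill X (Cand c E F))" "D' = Cand c A (fill X F)"
  have "rule1 (fill Hole (Cand c A (fill X F))) (fill Hole (Cand c A (fill X (Cand c E F))))"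
    by (rule cleansing_r)
  then have "provable D' \<longrightarrow> provable D" using h by (auto intro: by_rule1)
  moreover have "wins I M D = wins I M D'" for I M
    using h wins_fill_eq[of I M "Cand c E F" F X] by auto
  moreover have "rank D' \<le> rank D" using h rank_fill_mono[of F "Cand c E F" X] by simp
  ultimately show ?thesis unfolding good_def using valid_eq by blast
qed




section \<open>Simulation for stage 6\<close>

fun trs :: "nat \<Rightarrow> nat \<Rightarrow> nat \<Rightarrow> bool \<Rightarrow> lmove list \<Rightarrow> lmove list" where
  "trs a b c st [] = []"
| "trs a b c st (x # xs) = (if fst x = PBot \<and> fst (snd x) = Conj c then trs a b c st xs
     else if \<not> st \<and> fst x = PBot \<and> fst (snd x) = Conj a
       then (PBot, (Conj c, False)) # x # trs a b c True xs
     else if \<not> st \<and> fst x = PBot \<and> fst (snd x) = Conj b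
       then (PBot, (Conj c, True)) # x # trs a b c True xs
     else x # trs a b c st xs)"

fun stn :: "nat \<Rightarrow> nat \<Rightarrow> nat \<Rightarrow> bool \<Rightarrow> lmove list \<Rightarrow> bool" where
  "stn a b c st [] = st"
| "stn a b c st (x # xs) = (if fst x = PBot \<and> fst (snd x) = Conj c then stn a b c st xs
     else if \<not> st \<and> fst x = PBot \<and> (fst (snd x) = Conj a \<or> fst (snd x) = Conj b)
       then stn a b c True xs
     else stn a b c st xs)"

lemma trs_append: "trs a b c st (xs @ ys) = trs a b c st xs @ trs a b c (stn a b c st xs) ys"
  by (induction xs arbitrary: st) auto

lemma trs_PBot: "\<forall>x\<in>set xs. fst x = PBot \<Longrightarrow> \<forall>x\<in>set (trs a b c st xs). fst x = PBot"
  by (induction xs arbitrary: st) auto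

lemma map_PBot: "\<forall>x\<in>set l. fst x = PBot \<Longrightarrow> map (Pair PBot) (map snd l) = l"
  by (induction l) auto

lemma trs_mv: "trs a b c st (case m of None \<Rightarrow> [] | Some m \<Rightarrow> [(PTop, m)]) =
    (case m of None \<Rightarrow> [] | Some m \<Rightarrow> [(PTop, m)])"
  "stn a b c st (case m of None \<Rightarrow> [] | Some m \<Rightarrow> [(PTop, m)]) = st"
  by (cases m; simp)+

definition msim :: "nat \<Rightarrow> nat \<Rightarrow> nat \<Rightarrow> machine \<Rightarrow> machine" where
  "msim a b c M' = (\<lambda>h. M' (map (trs a b c False) h))"

definition esim :: "nat \<Rightarrow> nat \<Rightarrow> nat \<Rightarrow> machine \<Rightarrow> environment \<Rightarrow> environment" where
  "esim a b c M' E = (\<lambda>t. map snd (trs a b c (stn a b c False (run_tape (msim a b c M') E t))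
                                    (map (Pair PBot) (E t))))"

lemma hist_ne: "hist M E t \<noteq> []"
  by (cases t) (auto simp: Let_def)

lemma hist_sim: "hist M' (esim a b c M' E) t = map (trs a b c False) (hist (msim a b c M') E t)"
proof (induction t)
  case 0
  then show ?case by simp
next
  case (Suc t)
  let ?H = "hist (msim a b c M') E t"
  let ?mv = "case M' (map (trs a b c False) ?H) of None \<Rightarrow> [] | Some m \<Rightarrow> [(PTop, m)]"
  have ne: "?H \<noteq> []" by (rule hist_ne)
  have pb: "\<forall>x\<in>set (map (Pair PBot) (E t)). fst x = PBot" by auto
  have e: "map (Pair PBot) (esim a b c M' E t) =
      trs a b c (stn a b c False (last ?H)) (map (Pair PBot) (E t))"
    unfolding esim_def run_tape_def by (rule map_PBot[OF trs_PBot[OF pb]])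
  show ?case
    using ne by (simp add: Let_def Suc.IH last_map msim_def trs_append trs_mv e)
qed

lemma run_tape_sim: "run_tape M' (esim a b c M' E) t = trs a b c False (run_tape (msim a b c M') E t)"
  unfolding run_tape_def hist_sim using hist_ne by (simp add: last_map)

abbreviation clus :: "lmove \<Rightarrow> cluster" where "clus x \<equiv> fst (snd x)"

fun fb :: "cluster set \<Rightarrow> lmove list \<Rightarrow> player option" where
  "fb S [] = None"
| "fb S (x # xs) = (if label_ok x \<and> clus x \<notin> S then fb (insert (clus x) S) xs else Some (fst x))"

lemma legal_list_iff: "legal_list l \<longleftrightarrow> (\<forall>x\<in>set l. label_ok x) \<and> distinct (map clus l)"
proof
  assume h: "legal_list l"
  have "\<forall>x\<in>set l. label_ok x"
  proof
    fix x assume "x \<in> set l"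
    then obtain i where "i < length l" "l ! i = x" by (auto simp: in_set_conv_nth)
    then show "label_ok x" using h unfolding legal_list_def by blast
  qed
  moreover have "distinct (map clus l)" unfolding distinct_conv_nth
  proof (intro allI impI)
    fix i j assume ij: "i < length (map clus l)" "j < length (map clus l)" "i \<noteq> j"
    show "map clus l ! i \<noteq> map clus l ! j"
    proof (cases "i < j")
      case True then show ?thesis using h ij unfolding legal_list_def by auto
    next
      case False then have "j < i" using ij by auto
      then show ?thesis using h ij unfolding legal_list_def by fastforce
    qed
  qed
  ultimately show "(\<forall>x\<in>set l. label_ok x) \<and> distinct (map clus l)" by blast
next
  assume h: "(\<forall>x\<in>set l. label_ok x) \<and> distinct (map clus l)"
  show "legal_list l" unfolding legal_list_def
  proof (intro allI impI conjI)
    fix i assume i: "i < length l"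
    then show "label_ok (l ! i)" using h by auto
    fix j assume "j < i"
    then show "clus (l ! j) \<noteq> clus (l ! i)" using h i
      by (metis (no_types, lifting) distinct_conv_nth length_map less_trans nat_neq_iff nth_map)
  qed
qed

lemma fb_None: "fb S l = None \<longleftrightarrow> (\<forall>x\<in>set l. label_ok x) \<and> distinct (map clus l) \<and> (\<forall>x\<in>set l. clus x \<notin> S)"
  by (induction l arbitrary: S) (auto, fastforce+)

lemma legal_fb: "legal_list l \<longleftrightarrow> fb {} l = None"
  by (simp add: legal_list_iff fb_None)

lemma first_bad: "fb S l = Some p \<Longrightarrow> fst (l ! (LEAST k. fb S (take (Suc k) l) \<noteq> None)) = p"
proof (induction l arbitrary: S)
  case Nil
  then show ?case by simp
next
  case (Cons x xs)
  show ?case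
  proof (cases "label_ok x \<and> clus x \<notin> S")
    case False
    then have "(LEAST k. fb S (take (Suc k) (x # xs)) \<noteq> None) = 0"
      by (intro Least_equality) auto
    then show ?thesis using False Cons.prems by (auto split: if_splits)
  next
    case True
    let ?S = "insert (clus x) S"
    have ex: "fb S (take (Suc (length (x # xs))) (x # xs)) \<noteq> None" using Cons.prems by simp
    have "(LEAST k. fb S (take (Suc k) (x # xs)) \<noteq> None) =
        Suc (LEAST k. fb S (take (Suc (Suc k)) (x # xs)) \<noteq> None)"
      by (rule Least_Suc[of "\<lambda>k. fb S (take (Suc k) (x # xs)) \<noteq> None", OF ex]) (use True in simp)
    also have "(\<lambda>k. fb S (take (Suc (Suc k)) (x # xs)) \<noteq> None) = (\<lambda>k. fb ?S (take (Suc k) xs) \<noteq> None)"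
      using True by simp
    finally show ?thesis using Cons.IH[of ?S] Cons.prems True by simp
  qed
qed

lemma fb_trs:
  assumes "a \<noteq> c" "b \<noteq> c"
  shows "fb S l \<noteq> Some PBot \<Longrightarrow> (\<forall>k. k \<noteq> Conj c \<longrightarrow> (k \<in> S \<longleftrightarrow> k \<in> S')) \<Longrightarrow> (Conj c \<in> S' \<longleftrightarrow> st)
    \<Longrightarrow> fb S' (trs a b c st l) = fb S l"
proof (induction l arbitrary: S S' st)
  case Nil
  then show ?case by simp
next
  case (Cons x xs)
  obtain p k v where x: "x = (p, (k, v))" by (cases x) auto
  show ?case
  proof (cases p)
    case PTop
    then show ?thesis using Cons x
      by (cases k) (auto intro!: Cons.IH)
  next
    case PBot
    then show ?thesis using Cons x assms
      by (cases k) (auto intro!: Cons.IH)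
  qed
qed




lemma trs_set_other: "clus x \<noteq> Conj c \<Longrightarrow> (x \<in> set (trs a b c st l) \<longleftrightarrow> x \<in> set l)"
  by (induction l arbitrary: st) auto

lemma trs_snd_other: "k \<noteq> Conj c \<Longrightarrow> ((k, v) \<in> snd ` set (trs a b c st l) \<longleftrightarrow> (k, v) \<in> snd ` set l)"
proof -
  assume k: "k \<noteq> Conj c"
  have "(k, v) \<in> snd ` set L \<longleftrightarrow> (\<exists>p. (p, (k, v)) \<in> set L)" for L :: "lmove list"
    by force
  then show ?thesis using trs_set_other[of "(_, (k, v))" c a b st l] k by auto
qed

lemma trs_cw: "a \<noteq> c \<Longrightarrow> b \<noteq> c \<Longrightarrow> (\<forall>x\<in>set l. label_ok x) \<Longrightarrow> (p, (Conj c, w)) \<in> set (trs a b c st l)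
   \<Longrightarrow> \<exists>q v. (q, (Conj (if w then b else a), v)) \<in> set l"
proof (induction l arbitrary: st)
  case (Cons x xs)
  obtain p0 k v where x: "x = (p0, (k, v))" by (cases x) auto
  have IH: "\<And>st. (p, (Conj c, w)) \<in> set (trs a b c st xs) \<Longrightarrow> \<exists>q v. (q, (Conj (if w then b else a), v)) \<in> set (x # xs)"
    using Cons.IH Cons.prems by fastforce
  have lx: "label_ok x" using Cons.prems(3) by simp
  show ?case
  proof (cases "p0 = PBot \<and> k = Conj c")
    case True
    then show ?thesis using Cons.prems(4) x IH by simp
  next
    case F1: False
    show ?thesis
    proof (cases "\<not> st \<and> p0 = PBot \<and> k = Conj a")
      case T2: True
      then have "(PBot, (Conj c, False)) = (p, (Conj c, w)) \<or> (p, (Conj c, w)) \<in> set (trs a b c True xs)"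
        using Cons.prems(1,4) x F1 by auto
      then show ?thesis
      proof
        assume "(PBot, (Conj c, False)) = (p, (Conj c, w))"
        then show ?thesis using x T2 by auto
      qed (use IH in blast)
    next
      case F2: False
      show ?thesis
      proof (cases "\<not> st \<and> p0 = PBot \<and> k = Conj b")
        case T3: True
        then have "(PBot, (Conj c, True)) = (p, (Conj c, w)) \<or> (p, (Conj c, w)) \<in> set (trs a b c True xs)"
          using Cons.prems(2,4) x F1 F2 by auto
        then show ?thesis
        proof
          assume "(PBot, (Conj c, True)) = (p, (Conj c, w))"
          then show ?thesis using x T3 by auto
        qed (use IH in blast)
      next
        case F3: False
        then have "x = (p, (Conj c, w)) \<or> (p, (Conj c, w)) \<in> set (trs a b c st xs)"
          using Cons.prems(4) x F1 F2 by auto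
        then show ?thesis
        proof
          assume "x = (p, (Conj c, w))"
          then have False using lx x F1 by (cases p0) auto
          then show ?thesis ..
        qed (use IH in blast)
      qed
    qed
  qed
qed simp

lemma trs_c0: "a \<noteq> c \<Longrightarrow> b \<noteq> c \<Longrightarrow> (\<forall>x\<in>set l. label_ok x) \<Longrightarrow> (p, (Conj c, False)) \<in> set (trs a b c st l)
   \<Longrightarrow> \<exists>q v. (q, (Conj a, v)) \<in> set l"
  using trs_cw[of a c b l p False st] by simp

lemma trs_c1: "a \<noteq> c \<Longrightarrow> b \<noteq> c \<Longrightarrow> (\<forall>x\<in>set l. label_ok x) \<Longrightarrow> (p, (Conj c, True)) \<in> set (trs a b c st l)
   \<Longrightarrow> \<exists>q v. (q, (Conj b, v)) \<in> set l"
  using trs_cw[of a c b l p True st] by simp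

lemma trs_cins: "a \<noteq> c \<Longrightarrow> b \<noteq> c \<Longrightarrow> (\<forall>x\<in>set l. label_ok x) \<Longrightarrow>
   (q, (Conj a, v)) \<in> set l \<or> (q, (Conj b, v)) \<in> set l \<Longrightarrow> \<not> st \<Longrightarrow>
   \<exists>p w. (p, (Conj c, w)) \<in> set (trs a b c st l)"
proof (induction l arbitrary: st)
  case (Cons x xs)
  obtain p0 k u where x: "x = (p0, (k, u))" by (cases x) auto
  have lx: "label_ok x" using Cons.prems(3) by simp
  show ?case
  proof (cases "p0 = PBot \<and> (k = Conj a \<or> k = Conj b)")
    case True
    then show ?thesis using x Cons.prems by auto
  next
    case False
    then have nx: "x \<noteq> (q, (Conj a, v))" "x \<noteq> (q, (Conj b, v))" using lx x by (cases p0; auto)+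
    then have "(q, (Conj a, v)) \<in> set xs \<or> (q, (Conj b, v)) \<in> set xs" using Cons.prems(4) by auto
    have lxs: "\<forall>x\<in>set xs. label_ok x" using Cons.prems(3) by simp
    have "\<exists>p w. (p, (Conj c, w)) \<in> set (trs a b c st xs)"
      by (rule Cons.IH[OF Cons.prems(1,2) lxs]) fact+
    then obtain p w where "(p, (Conj c, w)) \<in> set (trs a b c st xs)" by blast
    then show ?thesis using x False Cons.prems(5) by auto
  qed
qed simp

lemma wins_agree: "(\<forall>k v. k \<in> clusters C \<longrightarrow> ((k, v) \<in> M \<longleftrightarrow> (k, v) \<in> M')) \<Longrightarrow> wins I M C = wins I M' C"
  by (induction C) auto

lemma wins_agree_off:
  assumes "\<forall>k v. k \<noteq> Conj c \<longrightarrow> ((k, v) \<in> M \<longleftrightarrow> (k, v) \<in> M')" "Conj c \<notin> clusters C"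
  shows "wins I M C = wins I M' C"
proof (rule wins_agree, intro allI impI)
  fix k v assume "k \<in> clusters C"
  then have "k \<noteq> Conj c" using assms(2) by auto
  then show "((k, v) \<in> M \<longleftrightarrow> (k, v) \<in> M')" using assms(1) by blast
qed

lemma wins_ctx_transfer:
  assumes agree: "\<forall>k v. k \<noteq> Conj c \<longrightarrow> ((k, v) \<in> M \<longleftrightarrow> (k, v) \<in> M')"
  shows "Conj c \<notin> clusters (fill X Q) \<Longrightarrow> (wins I M' P \<Longrightarrow> wins I M Q) \<Longrightarrow>
    wins I M' (fill X P) \<Longrightarrow> wins I M (fill X Q)"
proof (induction X)
  case Hole
  then show ?case by simp
next
  case (COrL X B)
  have "wins I M B = wins I M' B" using COrL.prems(1) by (intro wins_agree_off[OF agree]) auto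
  then show ?case using COrL by auto
next
  case (COrR B X)
  have "wins I M B = wins I M' B" using COrR.prems(1) by (intro wins_agree_off[OF agree]) auto
  then show ?case using COrR by auto
next
  case (CAndL X B)
  have "wins I M B = wins I M' B" using CAndL.prems(1) by (intro wins_agree_off[OF agree]) auto
  then show ?case using CAndL by auto
next
  case (CAndR B X)
  have "wins I M B = wins I M' B" using CAndR.prems(1) by (intro wins_agree_off[OF agree]) auto
  then show ?case using CAndR by auto
next
  case (CCandL d X B)
  have "wins I M B = wins I M' B" using CCandL.prems(1) by (intro wins_agree_off[OF agree]) auto
  moreover have "Conj d \<noteq> Conj c" using CCandL.prems(1) by auto
  ultimately show ?case using CCandL agree by (auto split: if_splits)
next
  case (CCandR d B X)
  have "wins I M B = wins I M' B" using CCandR.prems(1) by (intro wins_agree_off[OF agree]) auto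
  moreover have "Conj d \<noteq> Conj c" using CCandR.prems(1) by auto
  ultimately show ?case using CCandR agree by (auto split: if_splits)
next
  case (CCorL d X B)
  have "wins I M B = wins I M' B" using CCorL.prems(1) by (intro wins_agree_off[OF agree]) auto
  then show ?case using CCorL agree by auto
next
  case (CCorR d B X)
  have "wins I M B = wins I M' B" using CCorR.prems(1) by (intro wins_agree_off[OF agree]) auto
  then show ?case using CCorR agree by auto
qed

lemma s6_sem:
  assumes agree: "\<forall>k v. k \<noteq> Conj c \<longrightarrow> ((k, v) \<in> M \<longleftrightarrow> (k, v) \<in> M')"
    and F2: "(Conj c, False) \<in> M' \<Longrightarrow> \<exists>v. (Conj a, v) \<in> M"
    and F3: "(Conj c, True) \<in> M' \<Longrightarrow> \<exists>v. (Conj b, v) \<in> M"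
    and F4: "(\<exists>v. (Conj a, v) \<in> M) \<or> (\<exists>v. (Conj b, v) \<in> M) \<Longrightarrow> \<exists>w. (Conj c, w) \<in> M'"
    and nc: "Conj c \<notin> clusters (And (Cand a A B) (Cand b E F))"
    and w: "wins I M' (Cand c (Cand a (And A (Cand b E F)) (And B (Cand b E F)))
                         (Cand b (And (Cand a A B) E) (And (Cand a A B) F)))"
  shows "wins I M (And (Cand a A B) (Cand b E F))"
proof -
  have ag: "wins I M' Z = wins I M Z" if "Conj c \<notin> clusters Z" for Z
    using wins_agree_off[OF agree that, of I] by (rule sym)
  have eA: "wins I M' A = wins I M A" and eB: "wins I M' B = wins I M B"
    and eE: "wins I M' E = wins I M E" and eF: "wins I M' F = wins I M F"
    using nc by (auto intro!: ag)
  have ac: "a \<noteq> c" "b \<noteq> c" using nc by auto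
  have ma: "(Conj a, v) \<in> M' \<longleftrightarrow> (Conj a, v) \<in> M" for v using agree ac by auto
  have mb: "(Conj b, v) \<in> M' \<longleftrightarrow> (Conj b, v) \<in> M" for v using agree ac by auto
  let ?Q1 = "Cand a A B" and ?Q2 = "Cand b E F"
  have e1: "wins I M' ?Q1 = wins I M ?Q1" by (rule ag) (use nc in simp)
  have e2: "wins I M' ?Q2 = wins I M ?Q2" by (rule ag) (use nc in simp)
  show ?thesis
  proof (cases "(Conj c, False) \<in> M'")
    case True
    then have w1: "wins I M' (Cand a (And A ?Q2) (And B ?Q2))" using w by simp
    obtain v where "(Conj a, v) \<in> M" using F2 True by blast
    then have "(Conj a, False) \<in> M \<or> (Conj a, True) \<in> M" by (cases v) auto
    then show ?thesis
    proof
      assume a0: "(Conj a, False) \<in> M"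
      then have "wins I M' A \<and> wins I M' ?Q2" using w1 ma by simp
      then show ?thesis using a0 eA e2 by simp
    next
      assume a1: "(Conj a, True) \<in> M"
      show ?thesis
      proof (cases "(Conj a, False) \<in> M")
        case True
        then have "wins I M' A \<and> wins I M' ?Q2" using w1 ma by simp
        then show ?thesis using True eA e2 by simp
      next
        case False
        then have "wins I M' B \<and> wins I M' ?Q2" using w1 ma a1 by simp
        then show ?thesis using False a1 eB e2 by simp
      qed
    qed
  next
    case c0: False
    show ?thesis
    proof (cases "(Conj c, True) \<in> M'")
      case True
      then have w1: "wins I M' (Cand b (And ?Q1 E) (And ?Q1 F))" using w c0 by simp
      obtain v where "(Conj b, v) \<in> M" using F3 True by blast
      then have "(Conj b, False) \<in> M \<or> (Conj b, True) \<in> M" by (cases v) auto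
      then show ?thesis
      proof
        assume b0: "(Conj b, False) \<in> M"
        then have "wins I M' ?Q1 \<and> wins I M' E" using w1 mb by simp
        then show ?thesis using b0 eE e1 by simp
      next
        assume b1: "(Conj b, True) \<in> M"
        show ?thesis
        proof (cases "(Conj b, False) \<in> M")
          case True
          then have "wins I M' ?Q1 \<and> wins I M' E" using w1 mb by simp
          then show ?thesis using True eE e1 by simp
        next
          case False
          then have "wins I M' ?Q1 \<and> wins I M' F" using w1 mb b1 by simp
          then show ?thesis using False b1 eF e1 by simp
        qed
      qed
    next
      case False
      then have "\<not> (\<exists>w. (Conj c, w) \<in> M')" using c0 by (metis (full_types))
      then have "\<not> (\<exists>v. (Conj a, v) \<in> M)" "\<not> (\<exists>v. (Conj b, v) \<in> M)" using F4 by blast+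
      then show ?thesis by auto
    qed
  qed
qed

lemma won_transfer:
  assumes ac: "a \<noteq> c" "b \<noteq> c"
    and sem: "\<And>M M'. \<forall>k v. k \<noteq> Conj c \<longrightarrow> ((k, v) \<in> M \<longleftrightarrow> (k, v) \<in> M') \<Longrightarrow>
       ((Conj c, False) \<in> M' \<Longrightarrow> \<exists>v. (Conj a, v) \<in> M) \<Longrightarrow>
       ((Conj c, True) \<in> M' \<Longrightarrow> \<exists>v. (Conj b, v) \<in> M) \<Longrightarrow>
       ((\<exists>v. (Conj a, v) \<in> M) \<or> (\<exists>v. (Conj b, v) \<in> M) \<Longrightarrow> \<exists>w. (Conj c, w) \<in> M') \<Longrightarrow>
       wins I M' D' \<Longrightarrow> wins I M D"
    and won: "won_run I D' (\<lambda>t. trs a b c False (R t))"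
  shows "won_run I D R"
proof -
  have tr: "fb {} (R t) \<noteq> Some PBot \<Longrightarrow> fb {} (trs a b c False (R t)) = fb {} (R t)" for t
    by (rule fb_trs[OF ac]) auto
  have first: "\<not> legal_list r \<Longrightarrow> fb {} r = Some (fst (r ! (LEAST k. \<not> legal_list (take (Suc k) r))))"
    for r
  proof -
    assume "\<not> legal_list r"
    then obtain p where p: "fb {} r = Some p" by (auto simp: legal_fb)
    then show ?thesis using first_bad[OF p] by (simp add: legal_fb)
  qed
  show ?thesis
  proof (cases "\<forall>t. legal_list (R t)")
    case True
    then have L: "fb {} (R t) = None" for t by (simp add: legal_fb)
    then have "legal_list (trs a b c False (R t))" for t using tr[of t] by (simp add: legal_fb)
    then have W: "wins I (\<Union>t. snd ` set (trs a b c False (R t))) D'"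
      using won unfolding won_run_def by simp
    have lab: "\<forall>x\<in>set (R t). label_ok x" for t using L[of t] by (simp add: fb_None)
    let ?M = "\<Union>t. snd ` set (R t)" and ?M' = "\<Union>t. snd ` set (trs a b c False (R t))"
    have "wins I ?M D"
    proof (rule sem[OF _ _ _ _ W])
      show "\<forall>k v. k \<noteq> Conj c \<longrightarrow> ((k, v) \<in> ?M \<longleftrightarrow> (k, v) \<in> ?M')"
      proof (intro allI impI)
        fix k v assume k: "k \<noteq> Conj c"
        have "\<forall>t. ((k, v) \<in> snd ` set (trs a b c False (R t))) = ((k, v) \<in> snd ` set (R t))"
          using trs_snd_other[OF k] by blast
        then show "(k, v) \<in> ?M \<longleftrightarrow> (k, v) \<in> ?M'" unfolding UN_iff by simp
      qed
    next
      assume "(Conj c, False) \<in> ?M'"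
      then obtain t p where "(p, (Conj c, False)) \<in> set (trs a b c False (R t))" by force
      then obtain q v where "(q, (Conj a, v)) \<in> set (R t)" using trs_c0[OF ac lab] by blast
      then show "\<exists>v. (Conj a, v) \<in> ?M" by force
    next
      assume "(Conj c, True) \<in> ?M'"
      then obtain t p where "(p, (Conj c, True)) \<in> set (trs a b c False (R t))" by force
      then obtain q v where "(q, (Conj b, v)) \<in> set (R t)" using trs_c1[OF ac lab] by blast
      then show "\<exists>v. (Conj b, v) \<in> ?M" by force
    next
      assume "(\<exists>v. (Conj a, v) \<in> ?M) \<or> (\<exists>v. (Conj b, v) \<in> ?M)"
      then obtain t q v where "(q, (Conj a, v)) \<in> set (R t) \<or> (q, (Conj b, v)) \<in> set (R t)" by force
      then obtain p w where "(p, (Conj c, w)) \<in> set (trs a b c False (R t))"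
        using trs_cins[OF ac lab] by blast
      then show "\<exists>w. (Conj c, w) \<in> ?M'" by force
    qed
    then show ?thesis using True unfolding won_run_def by simp
  next
    case False
    then obtain t0 where t0: "\<not> legal_list (R t0)" by blast
    show ?thesis
    proof (rule ccontr)
      assume nw: "\<not> won_run I D R"
      have top: "\<not> legal_list (R t) \<Longrightarrow> fb {} (R t) = Some PTop" for t
      proof -
        assume nl: "\<not> legal_list (R t)"
        have "fst (R t ! (LEAST k. \<not> legal_list (take (Suc k) (R t)))) \<noteq> PBot"
          using nw nl False unfolding won_run_def by auto
        then show ?thesis using first[OF nl] by (cases "fst (R t ! (LEAST k. \<not> legal_list (take (Suc k) (R t))))") auto
      qed
      have nb: "fb {} (R t) \<noteq> Some PBot" for t
      proof (cases "legal_list (R t)")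
        case True then show ?thesis by (simp add: legal_fb)
      next
        case False then show ?thesis using top[OF False] by simp
      qed
      have "\<not> legal_list (trs a b c False (R t0))"
        using tr[OF nb[of t0]] top[OF t0] by (simp add: legal_fb)
      then obtain t where t: "\<not> legal_list (trs a b c False (R t))"
        "fst (trs a b c False (R t) ! (LEAST k. \<not> legal_list (take (Suc k) (trs a b c False (R t))))) = PBot"
        using won unfolding won_run_def by (auto split: if_splits)
      have "fb {} (trs a b c False (R t)) = Some PBot" using first[OF t(1)] t(2) by simp
      moreover have "fb {} (trs a b c False (R t)) = fb {} (R t)" by (rule tr[OF nb[of t]])
      ultimately show False using nb[of t] by simp
    qed
  qed
qed




lemma clusters_fill: "clusters E \<subseteq> clusters (fill X E)"
  by (induction X) auto

lemma s6_fwd: "wins I M (And (Cand a A B) (Cand b E F)) \<Longrightarrow>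
  wins I M (Cand c (Cand a (And A (Cand b E F)) (And B (Cand b E F)))
                         (Cand b (And (Cand a A B) E) (And (Cand a A B) F)))"
  by (auto split: if_splits)

lemma good_s6: "s6 D D' \<Longrightarrow> good D D'"
  unfolding s6_def
proof (elim exE conjE)
  fix X a A B b E F c
  assume surf: "surface_ctx X" and D: "D = fill X (And (Cand a A B) (Cand b E F))"
    and nc: "Conj c \<notin> clusters D"
    and D': "D' = fill X (Cand c (Cand a (And A (Cand b E F)) (And B (Cand b E F)))
                         (Cand b (And (Cand a A B) E) (And (Cand a A B) F)))"
  let ?L = "And (Cand a A B) (Cand b E F)"
  let ?R = "Cand c (Cand a (And A (Cand b E F)) (And B (Cand b E F)))
                         (Cand b (And (Cand a A B) E) (And (Cand a A B) F))"
  have ncL: "Conj c \<notin> clusters ?L" using nc D clusters_fill[of ?L X] by auto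
  have ac: "a \<noteq> c" "b \<noteq> c" using ncL by auto
  have "rule1 (fill X ?R) (fill X ?L)" by (rule quadrilemma) (use nc D in simp)
  then have prov: "provable D' \<longrightarrow> provable D" using D D' by (auto intro: by_rule1)
  have rk: "rank D' \<le> rank D" using D D' rank_fill_mono[OF rank_s6] by simp
  have fwd: "valid D \<Longrightarrow> valid D'"
    using D D' by (auto intro: valid_mono wins_fill_mono s6_fwd)
  have bwd: "valid D" if vD': "valid D'"
  proof -
    obtain M' where M': "\<And>I E. won_run I D' (run_tape M' E)" using vD' unfolding valid_def by blast
    have "won_run I D (run_tape (msim a b c M') E)" for I E
    proof -
      let ?RT = "run_tape (msim a b c M') E"
      have eq: "run_tape M' (esim a b c M' E) = (\<lambda>t. trs a b c False (?RT t))"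
        by (rule ext) (rule run_tape_sim)
      have won: "won_run I D' (\<lambda>t. trs a b c False (?RT t))" using M'[of I "esim a b c M' E"] eq by simp
      show ?thesis
      proof (rule won_transfer[OF ac _ won])
        fix M M'
        assume agree: "\<forall>k v. k \<noteq> Conj c \<longrightarrow> ((k, v) \<in> M \<longleftrightarrow> (k, v) \<in> M')"
          and F2: "(Conj c, False) \<in> M' \<Longrightarrow> \<exists>v. (Conj a, v) \<in> M"
          and F3: "(Conj c, True) \<in> M' \<Longrightarrow> \<exists>v. (Conj b, v) \<in> M"
          and F4: "(\<exists>v. (Conj a, v) \<in> M) \<or> (\<exists>v. (Conj b, v) \<in> M) \<Longrightarrow> \<exists>w. (Conj c, w) \<in> M'"
          and w: "wins I M' D'"
        show "wins I M D" unfolding D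
        proof (rule wins_ctx_transfer[OF agree])
          show "Conj c \<notin> clusters (fill X ?L)" using nc D by simp
          show "wins I M' (fill X ?R)" using w D' by simp
          show "wins I M' ?R \<Longrightarrow> wins I M ?L" by (rule s6_sem[OF agree F2 F3 F4 ncL])
        qed
      qed
    qed
    then show ?thesis unfolding valid_def by blast
  qed
  show "good D D'" unfolding good_def using prov rk fwd bwd by blast
qed

lemma good_opt: "(\<And>D D'. r D D' \<Longrightarrow> good D D') \<Longrightarrow> opt_step r D D' \<Longrightarrow> good D D'"
  unfolding opt_step_def by (auto split: if_splits intro: good_refl)

lemma good_OO: "(\<And>D D'. r1 D D' \<Longrightarrow> good D D') \<Longrightarrow> (\<And>D D'. r2 D D' \<Longrightarrow> good D D') \<Longrightarrow>
   (r1 OO r2) D D' \<Longrightarrow> good D D'"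
  by (metis relcomppE good_trans)

lemma good_rtc: "(\<And>D D'. it D D' \<Longrightarrow> good D D') \<Longrightarrow> it\<^sup>*\<^sup>* D D' \<Longrightarrow> good D D'"
proof -
  assume h: "\<And>D D'. it D D' \<Longrightarrow> good D D'"
  assume "it\<^sup>*\<^sup>* D D'"
  then show "good D D'"
    by (induction rule: rtranclp_induct) (auto intro: good_refl good_trans h)
qed

lemma good_loop: "(\<And>D D'. it D D' \<Longrightarrow> good D D') \<Longrightarrow> loop it D D' \<Longrightarrow> good D D'"
  unfolding loop_def using good_rtc by blast

lemma good_purification: "purification A B \<Longrightarrow> good A B"
  unfolding purification_def
proof (elim exE conjE)
  fix D1 D2 D3 D4 D5 D6
  assume l1: "loop (opt_step s1a OO opt_step s1b) A D1" and l2: "loop (opt_step s2) D1 D2"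
    and l3: "loop (opt_step s3) D2 D3" and l4: "loop (opt_step s4) D3 D4"
    and l5: "loop (opt_step s5a OO opt_step s5b) D4 D5" and l6: "loop (opt_step s6) D5 D6"
    and l7: "loop (opt_step s7) D6 B"
  have "good A D1"
    by (rule good_loop[OF good_OO[OF good_opt[OF good_s1a] good_opt[OF good_s1b]] l1])
  moreover have "good D1 D2" by (rule good_loop[OF good_opt[OF good_s2] l2])
  moreover have "good D2 D3" by (rule good_loop[OF good_opt[OF good_s3] l3])
  moreover have "good D3 D4" by (rule good_loop[OF good_opt[OF good_s4] l4])
  moreover have "good D4 D5"
    by (rule good_loop[OF good_OO[OF good_opt[OF good_s5a] good_opt[OF good_s5b]] l5])
  moreover have "good D5 D6" by (rule good_loop[OF good_opt[OF good_s6] l6])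
  moreover have "good D6 B" by (rule good_loop[OF good_opt[OF good_s7] l7])
  ultimately show "good A B" by (meson good_trans)
qed




section \<open>Purity predicates\<close>

fun nb :: "cirq \<Rightarrow> bool" where
  "nb (Or A B) = (nb A \<and> nb B)"
| "nb (And A B) = (nb A \<and> nb B)"
| "nb Bot = False"
| "nb _ = True"

fun nt :: "cirq \<Rightarrow> bool" where
  "nt (Or A B) = (nt A \<and> nt B)"
| "nt (And A B) = (nt A \<and> nt B)"
| "nt Top = False"
| "nt _ = True"

fun noand :: "cirq \<Rightarrow> bool" where
  "noand (Or A B) = (noand A \<and> noand B)"
| "noand (And A B) = False"
| "noand _ = True"

fun cnf :: "cirq \<Rightarrow> bool" where
  "cnf (And A B) = (cnf A \<and> cnf B)"
| "cnf X = noand X"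

fun oa :: "cirq \<Rightarrow> bool" where
  "oa (Or A B) = (oa A \<and> oa B)"
| "oa (And A B) = False"
| "oa (Cand c A B) = False"
| "oa _ = True"

fun cnf3 :: "cirq \<Rightarrow> bool" where
  "cnf3 (And A B) = (cnf3 A \<and> cnf3 B)"
| "cnf3 (Cand c A B) = True"
| "cnf3 X = oa X"

fun ncomp :: "cirq \<Rightarrow> bool" where
  "ncomp (And A B) = (ncomp A \<and> ncomp B)"
| "ncomp (Cand c A B) = True"
| "ncomp X = (\<forall>p. \<not> (Pos p \<in> disjuncts X \<and> Neg p \<in> disjuncts X))"

fun andctx :: "ctx \<Rightarrow> bool" where
  "andctx Hole = True"
| "andctx (CAndL X _) = andctx X"
| "andctx (CAndR _ X) = andctx X"
| "andctx _ = False"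

definition cond6 :: "cirq \<Rightarrow> bool" where
  "cond6 D \<longleftrightarrow> (\<forall>A B. D = And A B \<longrightarrow> (\<exists>E\<in>conjuncts D. \<not> is_cand E))"

lemma nb_iff: "nb D \<longleftrightarrow> Bot \<notin> surf_subs D"
  by (induction D) auto

lemma nt_iff: "nt D \<longleftrightarrow> Top \<notin> surf_subs D"
  by (induction D) auto

lemma noand_cnf: "noand X \<Longrightarrow> cnf X"
  by (cases X) auto

lemma nb_rep: "nb (fill X E) \<Longrightarrow> (nb E \<Longrightarrow> nb E') \<Longrightarrow> nb (fill X E')"
  by (induction X) auto

lemma nt_rep: "nt (fill X E) \<Longrightarrow> (nt E \<Longrightarrow> nt E') \<Longrightarrow> nt (fill X E')"
  by (induction X) auto

lemma noand_rep: "noand (fill X E) \<Longrightarrow> (noand E \<Longrightarrow> noand E') \<Longrightarrow> noand (fill X E')"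
  by (induction X) auto

lemma cnf_rep: "cnf (fill X E) \<Longrightarrow> (cnf E \<Longrightarrow> cnf E') \<Longrightarrow> (noand E \<Longrightarrow> noand E') \<Longrightarrow> cnf (fill X E')"
  by (induction X) (auto intro: noand_rep)

lemma oa_rep: "oa (fill X E) \<Longrightarrow> (oa E \<Longrightarrow> oa E') \<Longrightarrow> oa (fill X E')"
  by (induction X) auto

lemma cnf3_rep: "cnf3 (fill X E) \<Longrightarrow> (cnf3 E \<Longrightarrow> cnf3 E') \<Longrightarrow> (oa E \<Longrightarrow> oa E') \<Longrightarrow> cnf3 (fill X E')"
  by (induction X) (auto intro: oa_rep)

lemma disj_lit_mono:
  assumes "\<And>L. L \<in> disjuncts E' \<Longrightarrow> (\<exists>p. L = Pos p \<or> L = Neg p) \<Longrightarrow> L \<in> disjuncts E"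
  shows "L \<in> disjuncts (fill X E') \<Longrightarrow> (\<exists>p. L = Pos p \<or> L = Neg p) \<Longrightarrow> L \<in> disjuncts (fill X E)"
  using assms by (induction X) auto

lemma ncomp_rep_lit:
  assumes "\<And>L. L \<in> disjuncts E' \<Longrightarrow> (\<exists>p. L = Pos p \<or> L = Neg p) \<Longrightarrow> L \<in> disjuncts E"
  shows "ncomp (fill X E) \<Longrightarrow> (ncomp E \<Longrightarrow> ncomp E') \<Longrightarrow> ncomp (fill X E')"
proof (induction X)
  case (COrL X B)
  then show ?case using disj_lit_mono[OF assms, where X=X] by auto
next
  case (COrR B X)
  then show ?case using disj_lit_mono[OF assms, where X=X] by auto
qed auto

lemma ncomp_rep_and: "andctx X \<Longrightarrow> ncomp (fill X E) \<Longrightarrow> (ncomp E \<Longrightarrow> ncomp E') \<Longrightarrow> ncomp (fill X E')"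
  by (induction X) auto

lemma oa_fill_and: "surface_ctx X \<Longrightarrow> \<not> oa (fill X (And P Q))"
  by (induction X) auto

lemma cnf3_andctx: "surface_ctx X \<Longrightarrow> cnf3 (fill X (And P Q)) \<Longrightarrow> andctx X"
  by (induction X) (auto simp: oa_fill_and)

lemma fill_Bot: "fill X E = Bot \<Longrightarrow> E = Bot"
  by (cases X) auto

lemma fill_Top: "fill X E = Top \<Longrightarrow> E = Top"
  by (cases X) auto

definition PB :: "cirq \<Rightarrow> bool" where "PB D \<longleftrightarrow> D = Bot \<or> nb D"
definition PT :: "cirq \<Rightarrow> bool" where "PT D \<longleftrightarrow> D = Top \<or> nt D"

lemma PB_rep: "PB (fill X E) \<Longrightarrow> E \<noteq> Bot \<Longrightarrow> (nb E \<Longrightarrow> nb E') \<Longrightarrow> PB (fill X E')"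
  unfolding PB_def using fill_Bot nb_rep by blast

lemma PT_rep: "PT (fill X E) \<Longrightarrow> E \<noteq> Top \<Longrightarrow> (nt E \<Longrightarrow> nt E') \<Longrightarrow> PT (fill X E')"
  unfolding PT_def using fill_Top nt_rep by blast

lemma PB_s2: "s2 D D' \<Longrightarrow> PB D \<Longrightarrow> PB D'"
  unfolding s2_def by (auto elim!: PB_rep)
lemma PB_s3: "s3 D D' \<Longrightarrow> PB D \<Longrightarrow> PB D'"
  unfolding s3_def by (auto elim!: PB_rep)
lemma PB_s4: "s4 D D' \<Longrightarrow> PB D \<Longrightarrow> PB D'"
  unfolding s4_def by (auto elim!: PB_rep)
lemma PB_s5a: "s5a D D' \<Longrightarrow> PB D \<Longrightarrow> PB D'"
  unfolding s5a_def by (auto elim!: PB_rep)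
lemma PB_s5b: "s5b D D' \<Longrightarrow> PB D \<Longrightarrow> PB D'"
  unfolding s5b_def by (auto elim!: PB_rep)
lemma PB_s6: "s6 D D' \<Longrightarrow> PB D \<Longrightarrow> PB D'"
  unfolding s6_def by (auto elim!: PB_rep)

lemma cnf_s3: "s3 D D' \<Longrightarrow> cnf D \<Longrightarrow> cnf D'"
  unfolding s3_def by (auto elim!: cnf_rep)

lemma cnf3_s4: "s4 D D' \<Longrightarrow> cnf3 D \<Longrightarrow> cnf3 D'"
  unfolding s4_def by (auto elim!: cnf3_rep)
lemma cnf3_s5a: "s5a D D' \<Longrightarrow> cnf3 D \<Longrightarrow> cnf3 D'"
  unfolding s5a_def by (auto elim!: cnf3_rep)
lemma cnf3_s5b: "s5b D D' \<Longrightarrow> cnf3 D \<Longrightarrow> cnf3 D'"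
  unfolding s5b_def by (auto elim!: cnf3_rep)
lemma cnf3_s6: "s6 D D' \<Longrightarrow> cnf3 D \<Longrightarrow> cnf3 D'"
  unfolding s6_def by (auto elim!: cnf3_rep)

lemma ncomp_s5a: "s5a D D' \<Longrightarrow> ncomp D \<Longrightarrow> ncomp D'"
  unfolding s5a_def
proof (elim exE conjE disjE)
  fix X A assume "D = fill X (Or Top A)" "D' = fill X Top" "ncomp D"
  then show "ncomp D'" by (auto elim!: ncomp_rep_lit[rotated])
next
  fix X A assume "D = fill X (Or A Top)" "D' = fill X Top" "ncomp D"
  then show "ncomp D'" by (auto elim!: ncomp_rep_lit[rotated])
qed

lemma ncomp_s5b: "s5b D D' \<Longrightarrow> cnf3 D \<Longrightarrow> ncomp D \<Longrightarrow> ncomp D'"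
  unfolding s5b_def
proof (elim exE conjE disjE)
  fix X A assume h: "surface_ctx X" "D = fill X (And Top A)" "D' = fill X A" "ncomp D" "cnf3 D"
  then have "andctx X" using cnf3_andctx by blast
  then show "ncomp D'" using h by (auto elim!: ncomp_rep_and)
next
  fix X A assume h: "surface_ctx X" "D = fill X (And A Top)" "D' = fill X A" "ncomp D" "cnf3 D"
  then have "andctx X" using cnf3_andctx by blast
  then show "ncomp D'" using h by (auto elim!: ncomp_rep_and)
qed

lemma ncomp_s6: "s6 D D' \<Longrightarrow> cnf3 D \<Longrightarrow> ncomp D \<Longrightarrow> ncomp D'"
  unfolding s6_def
proof (elim exE conjE)
  fix X a A B b E F c assume h: "surface_ctx X" "D = fill X (And (Cand a A B) (Cand b E F))"
    "D' = fill X (Cand c (Cand a (And A (Cand b E F)) (And B (Cand b E F)))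
                         (Cand b (And (Cand a A B) E) (And (Cand a A B) F)))" "ncomp D" "cnf3 D"
  then have "andctx X" using cnf3_andctx by blast
  then show "ncomp D'" using h by (auto elim!: ncomp_rep_and)
qed

lemma PT_s6: "s6 D D' \<Longrightarrow> PT D \<Longrightarrow> PT D'"
  unfolding s6_def by (auto elim!: PT_rep)

lemma s1a_lift: "s1a A E \<Longrightarrow> surface_ctx Y \<Longrightarrow> s1a (fill Y A) (fill Y E)"
  unfolding s1a_def by (metis fill_cc surface_cc)
lemma s1b_lift: "s1b A E \<Longrightarrow> surface_ctx Y \<Longrightarrow> s1b (fill Y A) (fill Y E)"
  unfolding s1b_def by (metis fill_cc surface_cc)
lemma s2_lift: "s2 A E \<Longrightarrow> surface_ctx Y \<Longrightarrow> s2 (fill Y A) (fill Y E)"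
  unfolding s2_def by (metis fill_cc surface_cc)
lemma s3_lift: "s3 A E \<Longrightarrow> surface_ctx Y \<Longrightarrow> s3 (fill Y A) (fill Y E)"
  unfolding s3_def by (metis fill_cc surface_cc)
lemma s4_lift: "s4 A E \<Longrightarrow> surface_ctx Y \<Longrightarrow> s4 (fill Y A) (fill Y E)"
  unfolding s4_def by (metis fill_cc surface_cc)
lemma s5a_lift: "s5a A E \<Longrightarrow> surface_ctx Y \<Longrightarrow> s5a (fill Y A) (fill Y E)"
  unfolding s5a_def by (metis fill_cc surface_cc)
lemma s5b_lift: "s5b A E \<Longrightarrow> surface_ctx Y \<Longrightarrow> s5b (fill Y A) (fill Y E)"
  unfolding s5b_def by (metis fill_cc surface_cc)

definition nostep :: "(cirq \<Rightarrow> cirq \<Rightarrow> bool) \<Rightarrow> cirq \<Rightarrow> bool" where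
  "nostep r D \<longleftrightarrow> (\<forall>E. \<not> r D E)"

lemma nostep_sub:
  assumes lift: "\<And>A E Y. r A E \<Longrightarrow> surface_ctx Y \<Longrightarrow> r (fill Y A) (fill Y E)"
  shows "nostep r (Or A B) \<Longrightarrow> nostep r A" "nostep r (Or A B) \<Longrightarrow> nostep r B"
    "nostep r (And A B) \<Longrightarrow> nostep r A" "nostep r (And A B) \<Longrightarrow> nostep r B"
  unfolding nostep_def
  using lift[of A _ "COrL Hole B"] lift[of B _ "COrR A Hole"]
    lift[of A _ "CAndL Hole B"] lift[of B _ "CAndR A Hole"] by auto

lemma end1: "nostep s1a D \<Longrightarrow> nostep s1b D \<Longrightarrow> PB D"
proof (induction D)
  case (Or A B)
  have "PB A" "PB B" using Or nostep_sub[where r=s1a, OF s1a_lift] nostep_sub[where r=s1b, OF s1b_lift] by blast+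
  moreover have "A \<noteq> Bot" using Or.prems(1) unfolding nostep_def s1a_def
    by (metis fill.simps(1) surface_ctx.simps(1))
  moreover have "B \<noteq> Bot" using Or.prems(1) unfolding nostep_def s1a_def
    by (metis fill.simps(1) surface_ctx.simps(1))
  ultimately show ?case unfolding PB_def by simp
next
  case (And A B)
  have "PB A" "PB B" using And nostep_sub[where r=s1a, OF s1a_lift] nostep_sub[where r=s1b, OF s1b_lift] by blast+
  moreover have "A \<noteq> Bot" using And.prems(2) unfolding nostep_def s1b_def
    by (metis fill.simps(1) surface_ctx.simps(1))
  moreover have "B \<noteq> Bot" using And.prems(2) unfolding nostep_def s1b_def
    by (metis fill.simps(1) surface_ctx.simps(1))
  ultimately show ?case unfolding PB_def by simp
qed (auto simp: PB_def)

lemma end5: "nostep s5a D \<Longrightarrow> nostep s5b D \<Longrightarrow> PT D"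
proof (induction D)
  case (Or A B)
  have "PT A" "PT B" using Or nostep_sub[where r=s5a, OF s5a_lift] nostep_sub[where r=s5b, OF s5b_lift] by blast+
  moreover have "A \<noteq> Top" using Or.prems(1) unfolding nostep_def s5a_def
    by (metis fill.simps(1) surface_ctx.simps(1))
  moreover have "B \<noteq> Top" using Or.prems(1) unfolding nostep_def s5a_def
    by (metis fill.simps(1) surface_ctx.simps(1))
  ultimately show ?case unfolding PT_def by simp
next
  case (And A B)
  have "PT A" "PT B" using And nostep_sub[where r=s5a, OF s5a_lift] nostep_sub[where r=s5b, OF s5b_lift] by blast+
  moreover have "A \<noteq> Top" using And.prems(2) unfolding nostep_def s5b_def
    by (metis fill.simps(1) surface_ctx.simps(1))
  moreover have "B \<noteq> Top" using And.prems(2) unfolding nostep_def s5b_def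
    by (metis fill.simps(1) surface_ctx.simps(1))
  ultimately show ?case unfolding PT_def by simp
qed (auto simp: PT_def)

lemma cnf_noand: "cnf X \<Longrightarrow> \<not> (\<exists>P Q. X = And P Q) \<Longrightarrow> noand X"
  by (cases X) auto

lemma end2: "nostep s2 D \<Longrightarrow> cnf D"
proof (induction D)
  case (Or A B)
  have "cnf A" by (rule Or.IH(1)[OF nostep_sub(1)[where r=s2, OF s2_lift Or.prems(1)]])
  moreover have "cnf B" by (rule Or.IH(2)[OF nostep_sub(2)[where r=s2, OF s2_lift Or.prems(1)]])
  moreover have "\<not> (\<exists>P Q. A = And P Q)"
  proof
    assume "\<exists>P Q. A = And P Q"
    then obtain P Q where eqw: "A = And P Q" by blast
    have "s2 (Or A B) (fill Hole (And (Or P B) (Or Q B)))" unfolding s2_def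
      by (rule exI[of _ Hole], rule exI[of _ P], rule exI[of _ Q], rule exI[of _ B]) (simp add: eqw)
    then show False using Or.prems(1) unfolding nostep_def by blast
  qed
  moreover have "\<not> (\<exists>P Q. B = And P Q)"
  proof
    assume "\<exists>P Q. B = And P Q"
    then obtain P Q where eqw: "B = And P Q" by blast
    have "s2 (Or A B) (fill Hole (And (Or P A) (Or Q A)))" unfolding s2_def
      by (rule exI[of _ Hole], rule exI[of _ P], rule exI[of _ Q], rule exI[of _ A]) (simp add: eqw)
    then show False using Or.prems(1) unfolding nostep_def by blast
  qed
  ultimately have "noand A" "noand B" using cnf_noand by blast+
  then show ?case by simp
next
  case (And A B)
  have "cnf A" by (rule And.IH(1)[OF nostep_sub(3)[where r=s2, OF s2_lift And.prems(1)]])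
  moreover have "cnf B" by (rule And.IH(2)[OF nostep_sub(4)[where r=s2, OF s2_lift And.prems(1)]])
  ultimately show ?case by simp
qed simp_all

lemma cnf3_oa: "cnf3 X \<Longrightarrow> \<not> (\<exists>P Q. X = And P Q) \<Longrightarrow> \<not> (\<exists>c P Q. X = Cand c P Q) \<Longrightarrow> oa X"
  by (cases X) auto

lemma end3: "cnf D \<Longrightarrow> nostep s3 D \<Longrightarrow> cnf3 D"
proof (induction D)
  case (Or A B)
  have na: "noand A" "noand B" using Or.prems(1) by auto
  have "cnf3 A" by (rule Or.IH(1)[OF noand_cnf[OF na(1)] nostep_sub(1)[where r=s3, OF s3_lift Or.prems(2)]])
  moreover have "cnf3 B" by (rule Or.IH(2)[OF noand_cnf[OF na(2)] nostep_sub(2)[where r=s3, OF s3_lift Or.prems(2)]])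
  moreover have "\<not> (\<exists>c P Q. A = Cand c P Q)"
  proof
    assume "\<exists>c P Q. A = Cand c P Q"
    then obtain c P Q where eqw: "A = Cand c P Q" by blast
    have "s3 (Or A B) (fill Hole (Cand c (Or P B) (Or Q B)))" unfolding s3_def
      by (rule exI[of _ Hole], rule exI[of _ c], rule exI[of _ P], rule exI[of _ Q], rule exI[of _ B]) (simp add: eqw)
    then show False using Or.prems(2) unfolding nostep_def by blast
  qed
  moreover have "\<not> (\<exists>c P Q. B = Cand c P Q)"
  proof
    assume "\<exists>c P Q. B = Cand c P Q"
    then obtain c P Q where eqw: "B = Cand c P Q" by blast
    have "s3 (Or A B) (fill Hole (Cand c (Or P A) (Or Q A)))" unfolding s3_def
      by (rule exI[of _ Hole], rule exI[of _ c], rule exI[of _ P], rule exI[of _ Q], rule exI[of _ A]) (simp add: eqw)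
    then show False using Or.prems(2) unfolding nostep_def by blast
  qed
  moreover have "\<not> (\<exists>P Q. A = And P Q)" "\<not> (\<exists>P Q. B = And P Q)" using na by auto
  ultimately have "oa A" "oa B" using cnf3_oa by blast+
  then show ?case by simp
next
  case (And A B)
  have "cnf A" "cnf B" using And.prems(1) by auto
  then have "cnf3 A" "cnf3 B"
    using And.IH nostep_sub(3,4)[where r=s3, OF s3_lift And.prems(2)] by blast+
  then show ?case by simp
qed simp_all

lemma end4: "nostep s4 D \<Longrightarrow> ncomp D"
proof (induction D)
  case (Or A B)
  show ?case
  proof (rule ccontr)
    assume "\<not> ncomp (Or A B)"
    then obtain p where pn: "Pos p \<in> disjuncts (Or A B)" "Neg p \<in> disjuncts (Or A B)" by auto
    have "s4 (Or A B) (fill Hole Top)" unfolding s4_def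
      by (rule exI[of _ Hole], rule exI[of _ A], rule exI[of _ B], rule exI[of _ p]) (use pn in simp)
    then show False using Or.prems unfolding nostep_def by blast
  qed
next
  case (And A B)
  have "ncomp A" by (rule And.IH(1)[OF nostep_sub(3)[where r=s4, OF s4_lift And.prems(1)]])
  moreover have "ncomp B" by (rule And.IH(2)[OF nostep_sub(4)[where r=s4, OF s4_lift And.prems(1)]])
  ultimately show ?case by simp
qed simp_all

lemma conj_single: "\<not> (\<exists>P Q. T = And P Q) \<Longrightarrow> conjuncts T = {T}"
  by (cases T) auto

lemma all_cand_redex: "(\<forall>E\<in>conjuncts T. is_cand E) \<Longrightarrow> (\<exists>P Q. T = And P Q) \<Longrightarrow>
  \<exists>X a A B b E F. surface_ctx X \<and> T = fill X (And (Cand a A B) (Cand b E F))"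
proof (induction T)
  case (And T1 T2)
  have c1: "\<forall>E\<in>conjuncts T1. is_cand E" and c2: "\<forall>E\<in>conjuncts T2. is_cand E"
    using And.prems(1) by auto
  show ?case
  proof (cases "\<exists>P Q. T1 = And P Q")
    case True
    then obtain X a A B b E F where h: "surface_ctx X" "T1 = fill X (And (Cand a A B) (Cand b E F))"
      using And.IH(1)[OF c1] by blast
    have "surface_ctx (CAndL X T2) \<and> And T1 T2 = fill (CAndL X T2) (And (Cand a A B) (Cand b E F))"
      using h by simp
    then show ?thesis by blast
  next
    case F1: False
    show ?thesis
    proof (cases "\<exists>P Q. T2 = And P Q")
      case True
      then obtain X a A B b E F where h: "surface_ctx X" "T2 = fill X (And (Cand a A B) (Cand b E F))"
        using And.IH(2)[OF c2] by blast
      have "surface_ctx (CAndR T1 X) \<and> And T1 T2 = fill (CAndR T1 X) (And (Cand a A B) (Cand b E F))"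
        using h by simp
      then show ?thesis by blast
    next
      case False
      then have "is_cand T1" "is_cand T2" using F1 c1 c2 conj_single by auto
      then obtain a A B b E F where h: "T1 = Cand a A B" "T2 = Cand b E F"
        by (cases T1; cases T2) auto
      have "surface_ctx Hole \<and> And T1 T2 = fill Hole (And (Cand a A B) (Cand b E F))"
        using h by simp
      then show ?thesis by blast
    qed
  qed
qed auto

lemma finite_clusters: "finite (clusters D)"
  by (induction D) auto

lemma fresh_conj: "\<exists>c. Conj c \<notin> clusters D"
proof -
  have "finite (Conj -` clusters D)"
    by (rule finite_vimageI[OF finite_clusters]) (auto simp: inj_on_def)
  then obtain c where "c \<notin> Conj -` clusters D" using ex_new_if_finite[OF infinite_UNIV_nat] by blast
  then show ?thesis by auto
qed

lemma end6: "nostep s6 D \<Longrightarrow> cond6 D"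
  unfolding cond6_def
proof (intro allI impI)
  fix A B assume ns: "nostep s6 D" and D: "D = And A B"
  show "\<exists>E\<in>conjuncts D. \<not> is_cand E"
  proof (rule ccontr)
    assume "\<not> (\<exists>E\<in>conjuncts D. \<not> is_cand E)"
    then have "\<forall>E\<in>conjuncts D. is_cand E" by blast
    then obtain X a A B b E F where X: "surface_ctx X" "D = fill X (And (Cand a A B) (Cand b E F))"
      using all_cand_redex[of D] D by blast
    obtain c where c: "Conj c \<notin> clusters D" using fresh_conj by blast
    have "s6 D (fill X (Cand c (Cand a (And A (Cand b E F)) (And B (Cand b E F)))
                         (Cand b (And (Cand a A B) E) (And (Cand a A B) F))))"
      unfolding s6_def
      by (rule exI[of _ X], rule exI[of _ a], rule exI[of _ A], rule exI[of _ B], rule exI[of _ b],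
          rule exI[of _ E], rule exI[of _ F], rule exI[of _ c]) (use X c in simp)
    then show False using ns unfolding nostep_def by blast
  qed
qed

lemma conj_in_clusters: "Conj c \<in> clusters A \<Longrightarrow> \<exists>X E F. A = fill X (Cand c E F)"
proof (induction A)
  case (Or A1 A2)
  then consider "Conj c \<in> clusters A1" | "Conj c \<in> clusters A2" by auto
  then show ?case
  proof cases
    case 1
    then obtain X E F where "A1 = fill X (Cand c E F)" using Or.IH(1) by blast
    then have "Or A1 A2 = fill (COrL X A2) (Cand c E F)" by simp
    then show ?thesis by blast
  next
    case 2
    then obtain X E F where "A2 = fill X (Cand c E F)" using Or.IH(2) by blast
    then have "Or A1 A2 = fill (COrR A1 X) (Cand c E F)" by simp
    then show ?thesis by blast
  qed
next
  case (And A1 A2)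
  then consider "Conj c \<in> clusters A1" | "Conj c \<in> clusters A2" by auto
  then show ?case
  proof cases
    case 1
    then obtain X E F where "A1 = fill X (Cand c E F)" using And.IH(1) by blast
    then have "And A1 A2 = fill (CAndL X A2) (Cand c E F)" by simp
    then show ?thesis by blast
  next
    case 2
    then obtain X E F where "A2 = fill X (Cand c E F)" using And.IH(2) by blast
    then have "And A1 A2 = fill (CAndR A1 X) (Cand c E F)" by simp
    then show ?thesis by blast
  qed
next
  case (Cand d A1 A2)
  show ?case
  proof (cases "d = c")
    case True
    then have "Cand d A1 A2 = fill Hole (Cand c A1 A2)" by simp
    then show ?thesis by blast
  next
    case False
    then consider "Conj c \<in> clusters A1" | "Conj c \<in> clusters A2" using Cand.prems by auto
    then show ?thesis
    proof cases
      case 1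
      then obtain X E F where "A1 = fill X (Cand c E F)" using Cand.IH(1) by blast
      then have "Cand d A1 A2 = fill (CCandL d X A2) (Cand c E F)" by simp
      then show ?thesis by blast
    next
      case 2
      then obtain X E F where "A2 = fill X (Cand c E F)" using Cand.IH(2) by blast
      then have "Cand d A1 A2 = fill (CCandR d A1 X) (Cand c E F)" by simp
      then show ?thesis by blast
    qed
  qed
next
  case (Cor d A1 A2)
  then consider "Conj c \<in> clusters A1" | "Conj c \<in> clusters A2" by auto
  then show ?case
  proof cases
    case 1
    then obtain X E F where "A1 = fill X (Cand c E F)" using Cor.IH(1) by blast
    then have "Cor d A1 A2 = fill (CCorL d X A2) (Cand c E F)" by simp
    then show ?thesis by blast
  next
    case 2
    then obtain X E F where "A2 = fill X (Cand c E F)" using Cor.IH(2) by blast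
    then have "Cor d A1 A2 = fill (CCorR d A1 X) (Cand c E F)" by simp
    then show ?thesis by blast
  qed
qed auto

lemma end7: "nostep s7 (Cand c A B) \<Longrightarrow> Conj c \<notin> clusters A \<and> Conj c \<notin> clusters B"
proof (rule ccontr)
  assume ns: "nostep s7 (Cand c A B)" and "\<not> (Conj c \<notin> clusters A \<and> Conj c \<notin> clusters B)"
  then consider "Conj c \<in> clusters A" | "Conj c \<in> clusters B" by blast
  then show False
  proof cases
    case 1
    then obtain X E F where h: "A = fill X (Cand c E F)" using conj_in_clusters by blast
    have "s7 (Cand c A B) (Cand c (fill X E) B)" unfolding s7_def
      by (rule exI[of _ X], rule exI[of _ c], rule exI[of _ E], rule exI[of _ F], rule exI[of _ B])
         (use h in simp)
    then show False using ns unfolding nostep_def by blast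
  next
    case 2
    then obtain X E F where h: "B = fill X (Cand c E F)" using conj_in_clusters by blast
    have "s7 (Cand c A B) (Cand c A (fill X F))" unfolding s7_def
      by (rule exI[of _ X], rule exI[of _ c], rule exI[of _ E], rule exI[of _ F], rule exI[of _ A])
         (use h in simp)
    then show False using ns unfolding nostep_def by blast
  qed
qed




section \<open>Loops terminate in step-free cirquents\<close>

lemma fill_inj: "fill X E = fill X E' \<Longrightarrow> E = E'"
  by (induction X) auto

lemma fill_eq_iff: "(fill X E = fill X E') = (E = E')"
  using fill_inj by blast

lemma size_fill_less: "size E' < size E \<Longrightarrow> size (fill X E') < size (fill X E)"
  by (induction X) auto

lemma s1a_size: "s1a D D' \<Longrightarrow> size D' < size D"
  unfolding s1a_def by (auto intro!: size_fill_less)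
lemma s1b_size: "s1b D D' \<Longrightarrow> size D' < size D"
  unfolding s1b_def by (auto intro!: size_fill_less)
lemma s5a_size: "s5a D D' \<Longrightarrow> size D' < size D"
  unfolding s5a_def by (auto intro!: size_fill_less)
lemma s5b_size: "s5b D D' \<Longrightarrow> size D' < size D"
  unfolding s5b_def by (auto intro!: size_fill_less)

lemma s2_neq: "s2 D D' \<Longrightarrow> D' \<noteq> D"
  unfolding s2_def by (elim exE conjE disjE; simp add: fill_eq_iff)
lemma s3_neq: "s3 D D' \<Longrightarrow> D' \<noteq> D"
  unfolding s3_def by (elim exE conjE disjE; simp add: fill_eq_iff)
lemma s4_neq: "s4 D D' \<Longrightarrow> D' \<noteq> D"
  unfolding s4_def by (elim exE conjE disjE; simp add: fill_eq_iff)
lemma s6_neq: "s6 D D' \<Longrightarrow> D' \<noteq> D"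
  unfolding s6_def by (elim exE conjE disjE; simp add: fill_eq_iff)
lemma s7_neq: "s7 D D' \<Longrightarrow> D' \<noteq> D"
proof -
  have "Cand c E F \<noteq> E" for c E F
  proof
    assume "Cand c E F = E"
    then have "size (Cand c E F) = size E" by simp
    then show False by simp
  qed
  then have "fill X (Cand c E F) \<noteq> fill X E" for X c E F using fill_inj by blast
  moreover have "Cand c E F \<noteq> F" for c E F
  proof
    assume "Cand c E F = F"
    then have "size (Cand c E F) = size F" by simp
    then show False by simp
  qed
  then have "fill X (Cand c E F) \<noteq> fill X F" for X c E F using fill_inj by blast
  ultimately show "s7 D D' \<Longrightarrow> D' \<noteq> D" unfolding s7_def by auto
qed

lemma loop_end: "loop (opt_step r) D D' \<Longrightarrow> (\<And>x y. r x y \<Longrightarrow> y \<noteq> x) \<Longrightarrow> nostep r D'"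
  unfolding loop_def nostep_def opt_step_def by (metis (full_types))

lemma loop_OO_end:
  assumes l: "loop (opt_step r1 OO opt_step r2) D D'"
    and sz1: "\<And>x y. r1 x y \<Longrightarrow> size y < size x" and sz2: "\<And>x y. r2 x y \<Longrightarrow> size y < size x"
  shows "nostep r1 D' \<and> nostep r2 D'"
proof -
  have fx: "\<And>D''. (opt_step r1 OO opt_step r2) D' D'' \<Longrightarrow> D'' = D'" using l unfolding loop_def by blast
  have ex2: "\<exists>E2. opt_step r2 E E2 \<and> size E2 \<le> size E" for E
  proof (cases "\<exists>F. r2 E F")
    case True
    then obtain F where "r2 E F" by blast
    then show ?thesis using sz2[of E F] unfolding opt_step_def by (intro exI[of _ F]) auto
  next
    case False
    then show ?thesis unfolding opt_step_def by auto
  qed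
  have n1: "nostep r1 D'"
    unfolding nostep_def
  proof (intro allI notI)
    fix E assume r: "r1 D' E"
    then have o1: "opt_step r1 D' E" unfolding opt_step_def by auto
    obtain E2 where e2: "opt_step r2 E E2" "size E2 \<le> size E" using ex2 by blast
    have "(opt_step r1 OO opt_step r2) D' E2" using o1 e2(1) by (rule relcomppI)
    then have "E2 = D'" by (rule fx)
    moreover have "size E < size D'" using sz1[OF r] .
    ultimately show False using e2(2) by simp
  qed
  moreover have "nostep r2 D'"
    unfolding nostep_def
  proof (intro allI notI)
    fix E assume r: "r2 D' E"
    have o1: "opt_step r1 D' D'" using n1 unfolding opt_step_def nostep_def by auto
    have o2: "opt_step r2 D' E" using r unfolding opt_step_def by auto
    have "E = D'" using fx[of E] o1 o2 by blast
    then show False using sz2[OF r] by simp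
  qed
  ultimately show ?thesis by blast
qed

lemma inv_opt: "(\<And>x y. r x y \<Longrightarrow> P x \<Longrightarrow> P y) \<Longrightarrow> opt_step r x y \<Longrightarrow> P x \<Longrightarrow> P y"
  unfolding opt_step_def by (auto split: if_splits)

lemma inv_OO: "(\<And>x y. r1 x y \<Longrightarrow> P x \<Longrightarrow> P y) \<Longrightarrow> (\<And>x y. r2 x y \<Longrightarrow> P x \<Longrightarrow> P y) \<Longrightarrow>
   (opt_step r1 OO opt_step r2) x y \<Longrightarrow> P x \<Longrightarrow> P y"
proof -
  assume h1: "\<And>x y. r1 x y \<Longrightarrow> P x \<Longrightarrow> P y" and h2: "\<And>x y. r2 x y \<Longrightarrow> P x \<Longrightarrow> P y"
    and o: "(opt_step r1 OO opt_step r2) x y" and p: "P x"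
  from o obtain z where z: "opt_step r1 x z" "opt_step r2 z y" by blast
  have "P z" using z(1) p h1 unfolding opt_step_def by (auto split: if_splits)
  then show "P y" using z(2) h2 unfolding opt_step_def by (auto split: if_splits)
qed

lemma inv_loop: "(\<And>x y. it x y \<Longrightarrow> P x \<Longrightarrow> P y) \<Longrightarrow> loop it x y \<Longrightarrow> P x \<Longrightarrow> P y"
proof -
  assume h: "\<And>x y. it x y \<Longrightarrow> P x \<Longrightarrow> P y" and l: "loop it x y" and p: "P x"
  from l have "it\<^sup>*\<^sup>* x y" unfolding loop_def by blast
  then show "P y" using p by (induction rule: rtranclp_induct) (auto intro: h)
qed

lemma oa_sub: "oa X \<Longrightarrow> Y \<in> surf_subs X \<Longrightarrow> oa Y \<and> disjuncts Y \<subseteq> disjuncts X"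
  by (induction X) auto

lemma cnf3_or: "cnf3 D \<Longrightarrow> Or A B \<in> surf_subs D \<Longrightarrow> oa (Or A B)"
  by (induction D) (auto dest: oa_sub)

lemma cnf3_ncomp_or: "cnf3 D \<Longrightarrow> ncomp D \<Longrightarrow> Or A B \<in> surf_subs D \<Longrightarrow>
   \<not> (Pos p \<in> disjuncts (Or A B) \<and> Neg p \<in> disjuncts (Or A B))"
proof (induction D)
  case (Or D1 D2)
  have "oa (Or D1 D2)" using Or.prems(1) by simp
  then have "disjuncts (Or A B) \<subseteq> disjuncts (Or D1 D2)" using oa_sub Or.prems(3) by blast
  then show ?case using Or.prems(2) by auto
qed auto

lemma oa_no_and: "oa X \<Longrightarrow> And E F \<notin> surf_subs X"
  using oa_sub[of X "And E F"] by auto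
lemma oa_no_cand: "oa X \<Longrightarrow> Cand c E F \<notin> surf_subs X"
  using oa_sub[of X "Cand c E F"] by auto

lemma pure_final:
  assumes "PB D" "cnf3 D" "ncomp D" "PT D" "cond6 D" "\<not> is_cand D"
  shows "pure D"
  unfolding pure_def
proof (intro conjI allI impI)
  show "Bot \<in> surf_subs D \<Longrightarrow> D = Bot" using assms(1) nb_iff unfolding PB_def by blast
  show "Top \<in> surf_subs D \<Longrightarrow> D = Top" using assms(4) nt_iff unfolding PT_def by blast
  fix A B
  show "D = And A B \<Longrightarrow> \<exists>E\<in>conjuncts D. \<not> is_cand E" using assms(5) unfolding cond6_def by blast
  fix E F
  assume o: "Or A B \<in> surf_subs D"
  then have "oa A" "oa B" using cnf3_or[OF assms(2)] by auto
  then show "And E F \<notin> surf_subs A \<union> surf_subs B" using oa_no_and by blast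
next
  fix A B c E F assume o: "Or A B \<in> surf_subs D"
  then have "oa A" "oa B" using cnf3_or[OF assms(2)] by auto
  then show "Cand c E F \<notin> surf_subs A \<union> surf_subs B" using oa_no_cand by blast
next
  fix A B p assume o: "Or A B \<in> surf_subs D"
  then show "\<not> (Pos p \<in> disjuncts (Or A B) \<and> Neg p \<in> disjuncts (Or A B))"
    using cnf3_ncomp_or[OF assms(2,3)] by blast
next
  fix c A B assume "D = Cand c A B"
  then show "Conj c \<notin> clusters A" "Conj c \<notin> clusters B" using assms(6) by auto
qed

lemma pure_cand: "Conj c \<notin> clusters A \<Longrightarrow> Conj c \<notin> clusters B \<Longrightarrow> pure (Cand c A B)"
  unfolding pure_def by auto

lemma loop_inv1: "(\<And>x y. r x y \<Longrightarrow> P x \<Longrightarrow> P y) \<Longrightarrow> loop (opt_step r) x y \<Longrightarrow> P x \<Longrightarrow> P y"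
proof -
  assume h: "\<And>x y. r x y \<Longrightarrow> P x \<Longrightarrow> P y" and l: "loop (opt_step r) x y" and p: "P x"
  from l have "(opt_step r)\<^sup>*\<^sup>* x y" unfolding loop_def by blast
  then show "P y" using p
  proof (induction rule: rtranclp_induct)
    case (step y z)
    then show ?case using h unfolding opt_step_def by (auto split: if_splits)
  qed
qed

lemma loop_inv2: "(\<And>x y. r1 x y \<Longrightarrow> P x \<Longrightarrow> P y) \<Longrightarrow> (\<And>x y. r2 x y \<Longrightarrow> P x \<Longrightarrow> P y) \<Longrightarrow>
   loop (opt_step r1 OO opt_step r2) x y \<Longrightarrow> P x \<Longrightarrow> P y"
proof -
  assume h1: "\<And>x y. r1 x y \<Longrightarrow> P x \<Longrightarrow> P y" and h2: "\<And>x y. r2 x y \<Longrightarrow> P x \<Longrightarrow> P y"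
    and l: "loop (opt_step r1 OO opt_step r2) x y" and p: "P x"
  from l have "(opt_step r1 OO opt_step r2)\<^sup>*\<^sup>* x y" unfolding loop_def by blast
  then show "P y" using p
  proof (induction rule: rtranclp_induct)
    case (step y z)
    then obtain w where w: "opt_step r1 y w" "opt_step r2 w z" by blast
    have "P w" using w(1) step.IH step.prems h1 unfolding opt_step_def by (auto split: if_splits)
    then show ?case using w(2) h2 unfolding opt_step_def by (auto split: if_splits)
  qed
qed

lemma pure_purification: "purification A B \<Longrightarrow> pure B"
  unfolding purification_def
proof (elim exE conjE)
  fix D1 D2 D3 D4 D5 D6
  assume l1: "loop (opt_step s1a OO opt_step s1b) A D1" and l2: "loop (opt_step s2) D1 D2"
    and l3: "loop (opt_step s3) D2 D3" and l4: "loop (opt_step s4) D3 D4"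
    and l5: "loop (opt_step s5a OO opt_step s5b) D4 D5" and l6: "loop (opt_step s6) D5 D6"
    and l7: "loop (opt_step s7) D6 B"
  have e1: "nostep s1a D1 \<and> nostep s1b D1" by (rule loop_OO_end[OF l1 s1a_size s1b_size])
  have b1: "PB D1" using end1 e1 by blast
  have b2: "PB D2" by (rule loop_inv1[where P=PB, OF PB_s2 l2 b1])
  have c2: "cnf D2" by (rule end2[OF loop_end[OF l2 s2_neq]])
  have b3: "PB D3" by (rule loop_inv1[where P=PB, OF PB_s3 l3 b2])
  have c3': "cnf D3" by (rule loop_inv1[where P=cnf, OF cnf_s3 l3 c2])
  have c3: "cnf3 D3" by (rule end3[OF c3' loop_end[OF l3 s3_neq]])
  have b4: "PB D4" by (rule loop_inv1[where P=PB, OF PB_s4 l4 b3])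
  have c4: "cnf3 D4" by (rule loop_inv1[where P=cnf3, OF cnf3_s4 l4 c3])
  have n4: "ncomp D4" by (rule end4[OF loop_end[OF l4 s4_neq]])
  have b5: "PB D5" by (rule loop_inv2[where P=PB, OF PB_s5a PB_s5b l5 b4])
  have cn5: "cnf3 D5 \<and> ncomp D5"
    by (rule loop_inv2[where P="\<lambda>D. cnf3 D \<and> ncomp D", OF _ _ l5])
       (use c4 n4 cnf3_s5a ncomp_s5a cnf3_s5b ncomp_s5b in blast)+
  have e5: "nostep s5a D5 \<and> nostep s5b D5" by (rule loop_OO_end[OF l5 s5a_size s5b_size])
  have t5: "PT D5" using end5 e5 by blast
  have b6: "PB D6" by (rule loop_inv1[where P=PB, OF PB_s6 l6 b5])
  have cn6: "cnf3 D6 \<and> ncomp D6"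
    by (rule loop_inv1[where P="\<lambda>D. cnf3 D \<and> ncomp D", OF _ l6])
       (use cn5 cnf3_s6 ncomp_s6 in blast)+
  have t6: "PT D6" by (rule loop_inv1[where P=PT, OF PT_s6 l6 t5])
  have d6: "cond6 D6" by (rule end6[OF loop_end[OF l6 s6_neq]])
  show "pure B"
  proof (cases "is_cand D6")
    case True
    have s7c: "s7 x y \<Longrightarrow> is_cand x \<Longrightarrow> is_cand y" for x y unfolding s7_def by auto
    have "is_cand B" by (rule loop_inv1[where P=is_cand, OF s7c l7 True])
    then obtain c P Q where B: "B = Cand c P Q" by (cases B) auto
    have "nostep s7 B" by (rule loop_end[OF l7 s7_neq])
    then show ?thesis using B end7 pure_cand by blast
  next
    case False
    have s7n: "s7 x y \<Longrightarrow> x = D6 \<Longrightarrow> y = D6" for x y using False unfolding s7_def by auto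
    have "B = D6" by (rule loop_inv1[where P="\<lambda>x. x = D6", OF s7n l7 refl])
    then show ?thesis using pure_final[OF b6 _ _ t6 d6 False] cn6 by blast
  qed
qed

theorem lemma7p5:
  assumes "purification A B"
  shows "(provable B \<longrightarrow> provable A) \<and> (valid A \<longleftrightarrow> valid B) \<and> pure B \<and> rank B \<le> rank A"
  using good_purification[OF assms] pure_purification[OF assms] unfolding good_def by blast



end
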